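(* Assume there exist $\varepsilon_{\mathbb S}>0$ and $d>0$ such that for every $\varepsilon\in(0,\varepsilon_{\mathbb S})$ and every $(x,s)\in\mathbb X\times\mathbb S$: $$\sum_{n\ge1}\mathbb P_{(x,0)}(|S_n-s|<\varepsilon)=\infty,$$ $$\liminf_{N\to\infty}\frac{\sum_{n,m=1}^N\mathbb P_{(x,0)}(|S_n-s|<\varepsilon,\ |S_{n+m}-s|<\varepsilon)}{\big(\sum_{n=1}^N\mathbb P_{(x,0)}(|S_n-s|<\varepsilon)\big)^2}\le d.$$ Then $\mathcal R_{(\mu,0)}=\mathbb S$ for every probability measure $\mu$ on $(\mathbb X,\mathcal X)$.
   Context: $(\mathbb X,\mathcal X)$ is a measurable space. A Markov random walk (MRW) on $\mathbb X\times\mathbb R^2$ is a Markov chain $(X_n,S_n)_{n\ge0}$ with values in $\mathbb X\times\mathbb R^2$ whose transition kernel $P$ satisfies $P((x,s);A\times S)=P((x,0);A\times(S-s))$ for all $(x,s)\in\mathbb X\times\mathbb R^2$, $A\in\mathcal X$ and Borel $S\subset\mathbb R^2$; then $(X_n)_n$ is itself a Markov chain (the driving chain), with transition kernel denoted $Q$. One always takes $S_0=0$. For a probability measure $\mu$ on $\mathbb X$, $\mathbb P_{(\mu,0)}$ (expectation $\mathbb E_{(\mu,0)}$) is the law of the chain with $X_0\sim\mu$, $S_0=0$; $\mathbb P_{(x,0)}:=\mathbb P_{(\delta_x,0)}$. Standing assumptions: $Q$ has an invariant probability measure $\pi$; $S_1$ is $\mathbb P_{(\pi,0)}$-integrable with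 $\mathbb E_{(\pi,0)}[S_1]=0$; there is a two-dimensional closed subgroup $\mathbb S$ of $\mathbb R^2$ with $\mathbb P_{(x,0)}(S_n\in\mathbb S)=1$ for all $x\in\mathbb X$, $n\ge0$. $|\cdot|$ is the Euclidean norm, $B(s,\varepsilon)$ the open Euclidean ball, $m_{\mathbb S}$ a Haar measure on $\mathbb S$ (viewed as a measure on $\mathbb R^2$). The recurrence set is $\mathcal R_{(\mu,0)}:=\{s\in\mathbb S:\ \forall\varepsilon>0,\ \mathbb P_{(\mu,0)}(|S_n-s|<\varepsilon\text{ for infinitely many }n)=1\}$, $\mathcal R_{(x,0)}:=\mathcal R_{(\delta_x,0)}$. *)

theory Defs
  imports "HOL-Probability.Probability"
begin

definition state_space :: "'x measure \<Rightarrow> ('x \<times> (real^2)) measure" where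
  "state_space Xs = Xs \<Otimes>\<^sub>M (borel :: (real^2) measure)"

definition path_space :: "'x measure \<Rightarrow> (nat \<Rightarrow> 'x \<times> (real^2)) measure" where
  "path_space Xs = (\<Pi>\<^sub>M i\<in>(UNIV::nat set). state_space Xs)"

definition is_chain_law ::
  "'x measure \<Rightarrow> ('x \<times> (real^2) \<Rightarrow> ('x \<times> (real^2)) measure) \<Rightarrow> ('x \<times> (real^2)) measure
     \<Rightarrow> (nat \<Rightarrow> 'x \<times> (real^2)) measure \<Rightarrow> bool" where
  "is_chain_law Xs K \<nu> P \<longleftrightarrow>
     prob_space P \<and> sets P = sets (path_space Xs) \<and>
     distr P (state_space Xs) (\<lambda>\<omega>. \<omega> 0) = \<nu> \<and>
     (\<forall>n A B. (\<forall>i. A i \<in> sets (state_space Xs)) \<longrightarrow> B \<in> sets (state_space Xs) \<longrightarrow>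
        measure P {\<omega>\<in>space P. (\<forall>i\<le>n. \<omega> i \<in> A i) \<and> \<omega> (Suc n) \<in> B}
        = (\<integral>\<omega>. indicator {\<omega>\<in>space P. \<forall>i\<le>n. \<omega> i \<in> A i} \<omega> * measure (K (\<omega> n)) B \<partial>P))"

definition chain_law ::
  "'x measure \<Rightarrow> ('x \<times> (real^2) \<Rightarrow> ('x \<times> (real^2)) measure) \<Rightarrow> ('x \<times> (real^2)) measure
     \<Rightarrow> (nat \<Rightarrow> 'x \<times> (real^2)) measure" where
  "chain_law Xs K \<nu> = (THE P. is_chain_law Xs K \<nu> P)"

definition P0 ::
  "'x measure \<Rightarrow> ('x \<times> (real^2) \<Rightarrow> ('x \<times> (real^2)) measure) \<Rightarrow> 'x measure
     \<Rightarrow> (nat \<Rightarrow> 'x \<times> (real^2)) measure" where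
  "P0 Xs K \<mu> = chain_law Xs K (\<mu> \<Otimes>\<^sub>M return (borel :: (real^2) measure) 0)"

definition S :: "nat \<Rightarrow> (nat \<Rightarrow> 'x \<times> (real^2)) \<Rightarrow> real^2" where
  "S n \<omega> = snd (\<omega> n)"

definition recurrence_set ::
  "'x measure \<Rightarrow> ('x \<times> (real^2) \<Rightarrow> ('x \<times> (real^2)) measure) \<Rightarrow> (real^2) set \<Rightarrow> 'x measure
     \<Rightarrow> (real^2) set" where
  "recurrence_set Xs K SS \<mu> =
     {s\<in>SS. \<forall>\<epsilon>>0. measure (P0 Xs K \<mu>)
        {\<omega>\<in>space (P0 Xs K \<mu>). \<exists>\<^sub>\<infinity>n. norm (S n \<omega> - s) < \<epsilon>} = 1}"

end

theory Submission
  imports Defs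
begin

locale mrw =
  fixes Xs :: "'x measure" and K :: "'x \<times> (real^2) \<Rightarrow> ('x \<times> (real^2)) measure"
  assumes K_kernel: "K \<in> state_space Xs \<rightarrow>\<^sub>M prob_algebra (state_space Xs)"
begin

abbreviation "M \<equiv> state_space Xs"
abbreviation "PS \<equiv> Pi\<^sub>M (UNIV::nat set) (\<lambda>_. M)"

lemma path_space_eq: "path_space Xs = PS"
  by (simp add: path_space_def)

lemma K_sub[measurable]: "K \<in> M \<rightarrow>\<^sub>M subprob_algebra M"
  using K_kernel by (rule measurable_prob_algebraD)

lemma K_prob: "y \<in> space M \<Longrightarrow> prob_space (K y)"
  using measurable_space[OF K_kernel] by (auto simp: space_prob_algebra)

lemma K_sets: "y \<in> space M \<Longrightarrow> sets (K y) = sets M"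
  using measurable_space[OF K_kernel] by (auto simp: space_prob_algebra)

lemma K_emeasure_meas[measurable]:
  assumes "B \<in> sets M" shows "(\<lambda>y. emeasure (K y) B) \<in> borel_measurable M"
  using measurable_compose[OF K_sub measurable_emeasure_subprob_algebra[OF assms]] by simp

definition RECT :: "(nat \<Rightarrow> 'x \<times> (real^2)) measure \<Rightarrow> bool" where
  "RECT P \<longleftrightarrow> (\<forall>n A B. (\<forall>i. A i \<in> sets M) \<longrightarrow> B \<in> sets M \<longrightarrow>
     emeasure P {\<omega>\<in>space PS. (\<forall>i\<le>n. \<omega> i \<in> A i) \<and> \<omega> (Suc n) \<in> B}
     = (\<integral>\<^sup>+\<omega>. indicator {\<omega>\<in>space PS. \<forall>i\<le>n. \<omega> i \<in> A i} \<omega> * emeasure (K (\<omega> n)) B \<partial>P))"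

definition fdd :: "nat \<Rightarrow> (nat \<Rightarrow> 'x \<times> (real^2)) measure \<Rightarrow> (nat \<Rightarrow> 'x \<times> (real^2)) measure" where
  "fdd n P = distr P (Pi\<^sub>M {0..<n} (\<lambda>_. M)) (\<lambda>\<omega>. restrict \<omega> {0..<n})"

lemma fdd_rect:
  assumes sP: "sets P = sets PS" and A: "\<And>i. i < n \<Longrightarrow> A i \<in> sets M"
  shows "emeasure (fdd n P) (Pi\<^sub>E {0..<n} A) = emeasure P {\<omega>\<in>space PS. \<forall>i<n. \<omega> i \<in> A i}"
proof -
  have "Pi\<^sub>E {0..<n} A \<in> sets (Pi\<^sub>M {0..<n} (\<lambda>_. M))"
    using A by (intro sets_PiM_I_finite) auto
  then have "emeasure (fdd n P) (Pi\<^sub>E {0..<n} A) = emeasure P ((\<lambda>\<omega>. restrict \<omega> {0..<n}) -` Pi\<^sub>E {0..<n} A \<inter> space P)"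
    unfolding fdd_def by (subst emeasure_distr) (auto simp: measurable_cong_sets[OF sP refl] intro!: measurable_restrict_subset)
  also have "(\<lambda>\<omega>. restrict \<omega> {0..<n}) -` Pi\<^sub>E {0..<n} A \<inter> space P = {\<omega>\<in>space PS. \<forall>i<n. \<omega> i \<in> A i}"
    using sets_eq_imp_space_eq[OF sP] by (auto simp: PiE_iff)
  finally show ?thesis .
qed

lemma fdd_unique:
  assumes fP: "finite_measure P" and sP: "sets P = sets PS"
    and fP': "finite_measure P'" and sP': "sets P' = sets PS"
    and init: "distr P M (\<lambda>\<omega>. \<omega> 0) = distr P' M (\<lambda>\<omega>. \<omega> 0)"
    and R: "RECT P" and R': "RECT P'"
  shows "fdd (Suc n) P = fdd (Suc n) P'"
proof (induction n)
  case 0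
  show ?case
  proof (rule measure_eqI_PiM_finite[where A="\<lambda>_. space (Pi\<^sub>M {0..<Suc 0} (\<lambda>_. M))"])
    show "sets (fdd (Suc 0) P) = sets (Pi\<^sub>M {0..<Suc 0} (\<lambda>_. M))" "sets (fdd (Suc 0) P') = sets (Pi\<^sub>M {0..<Suc 0} (\<lambda>_. M))"
      by (simp_all add: fdd_def)
    fix A assume A: "\<And>i. i \<in> {0..<Suc 0} \<Longrightarrow> A i \<in> sets M"
    have "emeasure (fdd (Suc 0) P) (Pi\<^sub>E {0..<Suc 0} A) = emeasure P {\<omega>\<in>space PS. \<omega> 0 \<in> A 0}"
      using A by (subst fdd_rect[OF sP]) auto
    also have "\<dots> = emeasure (distr P M (\<lambda>\<omega>. \<omega> 0)) (A 0)"
      using A sets_eq_imp_space_eq[OF sP]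
      by (subst emeasure_distr) (auto simp: measurable_cong_sets[OF sP refl] intro!: arg_cong2[where f=emeasure])
    also have "\<dots> = emeasure (distr P' M (\<lambda>\<omega>. \<omega> 0)) (A 0)" by (simp add: init)
    also have "\<dots> = emeasure P' {\<omega>\<in>space PS. \<omega> 0 \<in> A 0}"
      using A sets_eq_imp_space_eq[OF sP']
      by (subst emeasure_distr) (auto simp: measurable_cong_sets[OF sP' refl] intro!: arg_cong2[where f=emeasure])
    also have "\<dots> = emeasure (fdd (Suc 0) P') (Pi\<^sub>E {0..<Suc 0} A)"
      using A by (subst fdd_rect[OF sP']) auto
    finally show "emeasure (fdd (Suc 0) P) (Pi\<^sub>E {0..<Suc 0} A) = emeasure (fdd (Suc 0) P') (Pi\<^sub>E {0..<Suc 0} A)" .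
  next
    show "range (\<lambda>_. space (Pi\<^sub>M {0..<Suc 0} (\<lambda>_. M))) \<subseteq> prod_algebra {0..<Suc 0} (\<lambda>_. M)"
      using prod_algebraI_finite[of "{0..<Suc 0}" "\<lambda>_. space M" "\<lambda>_. M"] by (auto simp: space_PiM)
    interpret finite_measure P by fact
    show "emeasure (fdd (Suc 0) P) (space (Pi\<^sub>M {0..<Suc 0} (\<lambda>_. M))) \<noteq> \<infinity>" for i::nat
      unfolding fdd_def by (subst emeasure_distr) (auto simp: measurable_cong_sets[OF sP refl] intro!: measurable_restrict_subset)
  qed auto
next
  case (Suc n)
  show ?case
  proof (rule measure_eqI_PiM_finite[where A="\<lambda>_. space (Pi\<^sub>M {0..<Suc (Suc n)} (\<lambda>_. M))"])
    show "sets (fdd (Suc (Suc n)) P) = sets (Pi\<^sub>M {0..<Suc (Suc n)} (\<lambda>_. M))" "sets (fdd (Suc (Suc n)) P') = sets (Pi\<^sub>M {0..<Suc (Suc n)} (\<lambda>_. M))"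
      by (simp_all add: fdd_def)
    fix A assume A: "\<And>i. i \<in> {0..<Suc (Suc n)} \<Longrightarrow> A i \<in> sets M"
    define A' where "A' i = (if i \<le> n then A i else space M)" for i
    have A'[measurable]: "A' i \<in> sets M" for i using A by (auto simp: A'_def)
    define g where "g x = indicator (Pi\<^sub>E {0..<Suc n} A') x * emeasure (K (x n)) (A (Suc n))" for x :: "nat \<Rightarrow> 'x \<times> (real^2)"
    have AS[measurable]: "A (Suc n) \<in> sets M" using A by auto
    have PiA'[measurable]: "Pi\<^sub>E {0..<Suc n} A' \<in> sets (Pi\<^sub>M {0..<Suc n} (\<lambda>_. M))"
      by (intro sets_PiM_I_finite) auto
    have gm[measurable]: "g \<in> borel_measurable (Pi\<^sub>M {0..<Suc n} (\<lambda>_. M))"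
      unfolding g_def by measurable
    have key: "emeasure (fdd (Suc (Suc n)) Q) (Pi\<^sub>E {0..<Suc (Suc n)} A) = (\<integral>\<^sup>+x. g x \<partial>fdd (Suc n) Q)"
      if sQ: "sets Q = sets PS" and RQ: "RECT Q" for Q
    proof -
      have "emeasure (fdd (Suc (Suc n)) Q) (Pi\<^sub>E {0..<Suc (Suc n)} A) = emeasure Q {\<omega>\<in>space PS. \<forall>i<Suc (Suc n). \<omega> i \<in> A i}"
        using A by (subst fdd_rect[OF sQ]) auto
      also have "{\<omega>\<in>space PS. \<forall>i<Suc (Suc n). \<omega> i \<in> A i} = {\<omega>\<in>space PS. (\<forall>i\<le>n. \<omega> i \<in> A' i) \<and> \<omega> (Suc n) \<in> A (Suc n)}"
        by (auto simp: A'_def less_Suc_eq_le le_Suc_eq)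
      also have "emeasure Q \<dots> = (\<integral>\<^sup>+\<omega>. indicator {\<omega>\<in>space PS. \<forall>i\<le>n. \<omega> i \<in> A' i} \<omega> * emeasure (K (\<omega> n)) (A (Suc n)) \<partial>Q)"
        using RQ A' AS unfolding RECT_def by blast
      also have "\<dots> = (\<integral>\<^sup>+\<omega>. g (restrict \<omega> {0..<Suc n}) \<partial>Q)"
        using sets_eq_imp_space_eq[OF sQ]
        by (intro nn_integral_cong) (auto simp: g_def indicator_def PiE_iff space_PiM less_Suc_eq_le A'_def)
      also have "\<dots> = (\<integral>\<^sup>+x. g x \<partial>fdd (Suc n) Q)"
        unfolding fdd_def by (subst nn_integral_distr) (auto simp: measurable_cong_sets[OF sQ refl] intro!: measurable_restrict_subset)
      finally show ?thesis .
    qed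
    show "emeasure (fdd (Suc (Suc n)) P) (Pi\<^sub>E {0..<Suc (Suc n)} A) = emeasure (fdd (Suc (Suc n)) P') (Pi\<^sub>E {0..<Suc (Suc n)} A)"
      using key[OF sP R] key[OF sP' R'] Suc by simp
  next
    show "range (\<lambda>_. space (Pi\<^sub>M {0..<Suc (Suc n)} (\<lambda>_. M))) \<subseteq> prod_algebra {0..<Suc (Suc n)} (\<lambda>_. M)"
      using prod_algebraI_finite[of "{0..<Suc (Suc n)}" "\<lambda>_. space M" "\<lambda>_. M"] by (auto simp: space_PiM)
    interpret finite_measure P by fact
    show "emeasure (fdd (Suc (Suc n)) P) (space (Pi\<^sub>M {0..<Suc (Suc n)} (\<lambda>_. M))) \<noteq> \<infinity>" for i::nat
      unfolding fdd_def by (subst emeasure_distr) (auto simp: measurable_cong_sets[OF sP refl] intro!: measurable_restrict_subset)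
  qed auto
qed

lemma chain_unique:
  assumes fP: "finite_measure P" and sP: "sets P = sets PS"
    and fP': "finite_measure P'" and sP': "sets P' = sets PS"
    and init: "distr P M (\<lambda>\<omega>. \<omega> 0) = distr P' M (\<lambda>\<omega>. \<omega> 0)"
    and R: "RECT P" and R': "RECT P'"
  shows "P = P'"
proof (rule measure_eqI_PiM_infinite[OF sP sP' _ fP])
  fix J :: "nat set" and A assume J: "finite J" and A: "\<And>i. i \<in> J \<Longrightarrow> A i \<in> sets M"
  obtain n where n: "J \<subseteq> {0..<Suc n}"
  proof -
    obtain k where "J \<subseteq> {..<k}" using finite_nat_bounded[OF J] by auto
    then have "J \<subseteq> {0..<Suc k}" by auto
    then show ?thesis using that by blast
  qed
  have X: "prod_emb {0..<Suc n} (\<lambda>_. M) J (Pi\<^sub>E J A) \<in> sets (Pi\<^sub>M {0..<Suc n} (\<lambda>_. M))"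
    using n A J by (intro sets_PiM_I) (auto intro!: sets_PiM_I_finite)
  have eq: "prod_emb UNIV (\<lambda>_. M) J (Pi\<^sub>E J A) = prod_emb UNIV (\<lambda>_. M) {0..<Suc n} (prod_emb {0..<Suc n} (\<lambda>_. M) J (Pi\<^sub>E J A))"
    using n by simp
  have "emeasure Q (prod_emb UNIV (\<lambda>_. M) J (Pi\<^sub>E J A)) = emeasure (fdd (Suc n) Q) (prod_emb {0..<Suc n} (\<lambda>_. M) J (Pi\<^sub>E J A))"
    if sQ: "sets Q = sets PS" for Q
    unfolding fdd_def eq by (rule emeasure_distr_restrict[symmetric, OF _ sQ X]) simp
  then show "emeasure P (prod_emb UNIV (\<lambda>_. M) J (Pi\<^sub>E J A)) = emeasure P' (prod_emb UNIV (\<lambda>_. M) J (Pi\<^sub>E J A))"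
    using fdd_unique[OF assms] sP sP' by metis
qed

end

context mrw begin

definition ITP :: "'x \<times> (real^2) \<Rightarrow> nat \<Rightarrow> (nat \<Rightarrow> 'x \<times> (real^2)) \<Rightarrow> ('x \<times> (real^2)) measure" where
  "ITP y i x = (case i of 0 \<Rightarrow> return M y | Suc n \<Rightarrow> K (x n))"

lemma ITP_meas: assumes y: "y \<in> space M" shows "ITP y i \<in> Pi\<^sub>M {0..<i} (\<lambda>_. M) \<rightarrow>\<^sub>M subprob_algebra M"
proof (cases i)
  case 0
  have r: "return M y \<in> space (subprob_algebra M)"
    using y by (auto simp: space_subprob_algebra intro!: prob_space_imp_subprob_space prob_space_return)
  have "ITP y i = (\<lambda>x. return M y)" using 0 by (auto simp: ITP_def fun_eq_iff)
  then show ?thesis using measurable_const[OF r] by simp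
next
  case (Suc n)
  have "(\<lambda>x. K (x n)) \<in> Pi\<^sub>M {0..<i} (\<lambda>_. M) \<rightarrow>\<^sub>M subprob_algebra M"
    using Suc by (intro measurable_compose[OF _ K_sub] measurable_component_singleton) auto
  moreover have "ITP y i = (\<lambda>x. K (x n))" using Suc by (auto simp: ITP_def fun_eq_iff)
  ultimately show ?thesis by simp
qed

lemma ITP_prob: assumes y: "y \<in> space M" and x: "x \<in> space (Pi\<^sub>M {0..<i} (\<lambda>_. M))" shows "prob_space (ITP y i x)"
proof (cases i)
  case 0 then show ?thesis using y by (simp add: ITP_def prob_space_return)
next
  case (Suc n)
  then have "x n \<in> space M" using x by (auto simp: space_PiM)
  then show ?thesis using Suc by (simp add: ITP_def K_prob)
qed

lemma IT_loc: assumes y: "y \<in> space M" shows "Ionescu_Tulcea (ITP y) (\<lambda>_. M)"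
  unfolding Ionescu_Tulcea_def using ITP_meas[OF y] ITP_prob[OF y] by blast

definition Qk :: "'x \<times> (real^2) \<Rightarrow> (nat \<Rightarrow> 'x \<times> (real^2)) measure" where
  "Qk y = projective_family.lim UNIV (Ionescu_Tulcea.CI (ITP y) (\<lambda>_. M)) (\<lambda>_. M)"

lemma Qk_sets: assumes y: "y \<in> space M" shows "sets (Qk y) = sets PS"
proof -
  interpret IT: Ionescu_Tulcea "ITP y" "\<lambda>_. M" by (rule IT_loc[OF y])
  show ?thesis by (simp add: Qk_def)
qed

lemma Qk_fdd: assumes y: "y \<in> space M"
  shows "fdd n (Qk y) = Ionescu_Tulcea.C (ITP y) (\<lambda>_. M) 0 n (\<lambda>_. undefined)"
proof -
  interpret IT: Ionescu_Tulcea "ITP y" "\<lambda>_. M" by (rule IT_loc[OF y])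
  have "fdd n (Qk y) = IT.CI {0..<n}"
    unfolding fdd_def Qk_def by (rule IT.distr_lim) simp
  also have "\<dots> = IT.C 0 n (\<lambda>_. undefined)"
  proof (rule measure_eqI)
    show "sets (IT.CI {0..<n}) = sets (IT.C 0 n (\<lambda>_. undefined))"
      by (simp add: IT.CI_def IT.sets_C space_PiM)
    fix X assume "X \<in> sets (IT.CI {0..<n})"
    then have X: "X \<in> sets (Pi\<^sub>M {0..<n} (\<lambda>_. M))" by (simp add: IT.CI_def)
    have "emeasure (IT.CI {0..<n}) X = emeasure (IT.C 0 n (\<lambda>_. undefined)) (prod_emb {0..<n} (\<lambda>_. M) {0..<n} X)"
      by (rule IT.emeasure_CI[OF subset_refl X])
    also have "prod_emb {0..<n} (\<lambda>_. M) {0..<n} X = X"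
      using sets.sets_into_space[OF X] by (intro prod_emb_id) (simp add: space_PiM)
    finally show "emeasure (IT.CI {0..<n}) X = emeasure (IT.C 0 n (\<lambda>_. undefined)) X" .
  qed
  finally show ?thesis .
qed

lemma Qk_prob: assumes y: "y \<in> space M" shows "prob_space (Qk y)"
proof -
  interpret IT: Ionescu_Tulcea "ITP y" "\<lambda>_. M" by (rule IT_loc[OF y])
  have "emeasure (fdd 0 (Qk y)) (space (Pi\<^sub>M {0..<0} (\<lambda>_. M))) = emeasure (Qk y) ((\<lambda>\<omega>. restrict \<omega> {0..<0}) -` space (Pi\<^sub>M {0..<0} (\<lambda>_. M)) \<inter> space (Qk y))"
    unfolding fdd_def 
    by (rule emeasure_distr) (auto simp: measurable_cong_sets[OF Qk_sets[OF y] refl] intro!: measurable_restrict_subset)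
  also have "(\<lambda>\<omega>. restrict \<omega> {0..<0}) -` space (Pi\<^sub>M {0..<0} (\<lambda>_. M)) \<inter> space (Qk y) = space (Qk y)"
    by (auto simp: space_PiM)
  finally have "emeasure (Qk y) (space (Qk y)) = emeasure (fdd 0 (Qk y)) (space (Pi\<^sub>M {0..<0} (\<lambda>_. M)))" ..
  also have "\<dots> = 1"
  proof -
    have u: "(\<lambda>_. undefined) \<in> space (Pi\<^sub>M {0..<0::nat} (\<lambda>_. M))" by (auto simp: space_PiM PiE_iff)
    have "emeasure (IT.C 0 0 (\<lambda>_. undefined)) (space (IT.C 0 0 (\<lambda>_. undefined))) = 1"
      using IT.prob_space_C[OF u, of 0] by (rule prob_space.emeasure_space_1)
    then show ?thesis unfolding Qk_fdd[OF y] IT.space_C[OF u] by simp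
  qed
  finally show ?thesis by (intro prob_spaceI)
qed

definition GX :: "(nat \<Rightarrow> 'x \<times> (real^2)) measure \<Rightarrow> bool" where
  "GX P \<longleftrightarrow> (\<forall>n X B. X \<in> sets (Pi\<^sub>M {0..<Suc n} (\<lambda>_. M)) \<longrightarrow> B \<in> sets M \<longrightarrow>
     emeasure P {\<omega>\<in>space PS. restrict \<omega> {0..<Suc n} \<in> X \<and> \<omega> (Suc n) \<in> B}
     = (\<integral>\<^sup>+\<omega>. indicator {\<omega>\<in>space PS. restrict \<omega> {0..<Suc n} \<in> X} \<omega> * emeasure (K (\<omega> n)) B \<partial>P))"

lemma GX_RECT: assumes "GX P" shows "RECT P"
  unfolding RECT_def
proof safe
  fix n and A :: "nat \<Rightarrow> _" and B assume A: "\<forall>i. A i \<in> sets M" and B: "B \<in> sets M"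
  have X: "Pi\<^sub>E {0..<Suc n} A \<in> sets (Pi\<^sub>M {0..<Suc n} (\<lambda>_. M))"
    using A by (intro sets_PiM_I_finite) auto
  have e1: "{\<omega>\<in>space PS. (\<forall>i\<le>n. \<omega> i \<in> A i) \<and> \<omega> (Suc n) \<in> B} = {\<omega>\<in>space PS. restrict \<omega> {0..<Suc n} \<in> Pi\<^sub>E {0..<Suc n} A \<and> \<omega> (Suc n) \<in> B}"
    by (auto simp: PiE_iff less_Suc_eq_le)
  have e2: "{\<omega>\<in>space PS. \<forall>i\<le>n. \<omega> i \<in> A i} = {\<omega>\<in>space PS. restrict \<omega> {0..<Suc n} \<in> Pi\<^sub>E {0..<Suc n} A}"
    by (auto simp: PiE_iff less_Suc_eq_le)
  show "emeasure P {\<omega>\<in>space PS. (\<forall>i\<le>n. \<omega> i \<in> A i) \<and> \<omega> (Suc n) \<in> B} =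
    (\<integral>\<^sup>+\<omega>. indicator {\<omega>\<in>space PS. \<forall>i\<le>n. \<omega> i \<in> A i} \<omega> * emeasure (K (\<omega> n)) B \<partial>P)"
    unfolding e1 e2 using assms X B unfolding GX_def by blast
qed

lemma Qk_GX: assumes y: "y \<in> space M" shows "GX (Qk y)"
  unfolding GX_def
proof safe
  interpret IT: Ionescu_Tulcea "ITP y" "\<lambda>_. M" by (rule IT_loc[OF y])
  fix n X B assume X[measurable]: "X \<in> sets (Pi\<^sub>M {0..<Suc n} (\<lambda>_. M))" and B[measurable]: "B \<in> sets M"
  let ?u = "\<lambda>_::nat. undefined :: 'x \<times> (real^2)"
  have u: "?u \<in> space (Pi\<^sub>M {0..<0} (\<lambda>_. M))" by (auto simp: space_PiM PiE_iff)
  note sQ = Qk_sets[OF y]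
  define X' where "X' = {x\<in>space (Pi\<^sub>M {0..<Suc (Suc n)} (\<lambda>_. M)). restrict x {0..<Suc n} \<in> X \<and> x (Suc n) \<in> B}"
  have X'[measurable]: "X' \<in> sets (Pi\<^sub>M {0..<Suc (Suc n)} (\<lambda>_. M))"
    unfolding X'_def by measurable
  define g where "g x = indicator X x * emeasure (K (x n)) B" for x :: "nat \<Rightarrow> 'x \<times> (real^2)"
  have gm[measurable]: "g \<in> borel_measurable (Pi\<^sub>M {0..<Suc n} (\<lambda>_. M))"
    unfolding g_def by measurable
  have "emeasure (Qk y) {\<omega>\<in>space PS. restrict \<omega> {0..<Suc n} \<in> X \<and> \<omega> (Suc n) \<in> B}
      = emeasure (fdd (Suc (Suc n)) (Qk y)) X'"
    unfolding fdd_def using sets_eq_imp_space_eq[OF sQ]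
    by (subst emeasure_distr) (auto simp: measurable_cong_sets[OF sQ refl] X'_def space_PiM
         intro!: measurable_restrict_subset arg_cong2[where f=emeasure])
  also have "\<dots> = emeasure (IT.C 0 (Suc n) ?u \<bind> IT.eP (Suc n)) X'"
    unfolding Qk_fdd[OF y] by (simp only: IT.C.simps add_0)
  also have "\<dots> = (\<integral>\<^sup>+x. emeasure (IT.eP (Suc n) x) X' \<partial>IT.C 0 (Suc n) ?u)"
  proof (rule emeasure_bind[OF _ _ X'])
    show "space (IT.C 0 (Suc n) ?u) \<noteq> {}" using IT.prob_space_C[OF u, of "Suc n"] by (simp add: prob_space.not_empty)
    show "IT.eP (Suc n) \<in> IT.C 0 (Suc n) ?u \<rightarrow>\<^sub>M subprob_algebra (Pi\<^sub>M {0..<Suc (Suc n)} (\<lambda>_. M))"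
      apply (subst measurable_cong_sets[OF IT.sets_C[OF u, of "Suc n"] refl])
      using IT.measurable_eP[of "Suc n"] by simp
  qed
  also have "\<dots> = (\<integral>\<^sup>+x. g x \<partial>IT.C 0 (Suc n) ?u)"
  proof (rule nn_integral_cong)
    fix x assume "x \<in> space (IT.C 0 (Suc n) ?u)"
    then have x: "x \<in> space (Pi\<^sub>M {0..<Suc n} (\<lambda>_. M))" using IT.space_C[OF u, of "Suc n"] by (simp del: IT.C.simps)
    then have xn: "x n \<in> space M" by (auto simp: space_PiM)
    have "emeasure (IT.eP (Suc n) x) X' = emeasure (ITP y (Suc n) x) ((\<lambda>z. x(Suc n := z)) -` X' \<inter> space M)"
      by (rule IT.emeasure_eP[OF x X'])
    also have "(\<lambda>z. x(Suc n := z)) -` X' \<inter> space M = (if x \<in> X then B else {})"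
    proof -
      have r: "restrict (x(Suc n := z)) {0..<Suc n} = x" for z
        using x by (auto simp: space_PiM PiE_iff extensional_def fun_eq_iff)
      show ?thesis using x sets.sets_into_space[OF B] unfolding X'_def
        by (auto simp: r space_PiM PiE_iff extensional_def)
    qed
    finally have "emeasure (IT.eP (Suc n) x) X' = emeasure (ITP y (Suc n) x) (if x \<in> X then B else {})" .
    then show "emeasure (IT.eP (Suc n) x) X' = g x"
      by (cases "x \<in> X") (simp_all add: g_def ITP_def)
  qed
  also have "\<dots> = (\<integral>\<^sup>+x. g x \<partial>fdd (Suc n) (Qk y))" unfolding Qk_fdd[OF y] ..
  also have "\<dots> = (\<integral>\<^sup>+\<omega>. g (restrict \<omega> {0..<Suc n}) \<partial>Qk y)"
    unfolding fdd_def by (subst nn_integral_distr) (auto simp: measurable_cong_sets[OF sQ refl] intro!: measurable_restrict_subset)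
  also have "\<dots> = (\<integral>\<^sup>+\<omega>. indicator {\<omega>\<in>space PS. restrict \<omega> {0..<Suc n} \<in> X} \<omega> * emeasure (K (\<omega> n)) B \<partial>Qk y)"
    using sets_eq_imp_space_eq[OF sQ]
    by (intro nn_integral_cong) (auto simp: g_def indicator_def)
  finally show "emeasure (Qk y) {\<omega>\<in>space PS. restrict \<omega> {0..<Suc n} \<in> X \<and> \<omega> (Suc n) \<in> B} =
    (\<integral>\<^sup>+\<omega>. indicator {\<omega>\<in>space PS. restrict \<omega> {0..<Suc n} \<in> X} \<omega> * emeasure (K (\<omega> n)) B \<partial>Qk y)" .
qed

end

context mrw begin

lemma u0_space: "(\<lambda>_. undefined) \<in> space (Pi\<^sub>M {0..<0::nat} (\<lambda>_. M))"
  by (auto simp: space_PiM PiE_iff)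

lemma C01: assumes y: "y \<in> space M"
  shows "Ionescu_Tulcea.C (ITP y) (\<lambda>_. M) 0 1 (\<lambda>_. undefined) = return (Pi\<^sub>M {0..<1::nat} (\<lambda>_. M)) ((\<lambda>_. undefined)(0 := y))"
proof -
  interpret IT: Ionescu_Tulcea "ITP y" "\<lambda>_. M" by (rule IT_loc[OF y])
  have "IT.C 0 1 (\<lambda>_. undefined) = return (Pi\<^sub>M {0..<0} (\<lambda>_. M)) (\<lambda>_. undefined) \<bind> IT.eP 0"
    by (simp add: One_nat_def)
  also have "\<dots> = IT.eP 0 (\<lambda>_. undefined)"
    by (rule bind_return[OF IT.measurable_eP u0_space])
  also have "\<dots> = distr (return M y) (Pi\<^sub>M {0..<1::nat} (\<lambda>_. M)) (fun_upd (\<lambda>_. undefined) 0)"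
    by (simp add: IT.eP_def ITP_def One_nat_def)
  also have "\<dots> = return (Pi\<^sub>M {0..<1::nat} (\<lambda>_. M)) ((\<lambda>_. undefined)(0 := y))"
  proof (rule distr_return[OF _ y])
    show "fun_upd (\<lambda>_. undefined) 0 \<in> M \<rightarrow>\<^sub>M Pi\<^sub>M {0..<1::nat} (\<lambda>_. M)"
      by (rule measurable_fun_upd[where J="{0..<0::nat}"]) (auto intro: u0_space)
  qed
  finally show ?thesis .
qed

lemma Qk_init: assumes y: "y \<in> space M" shows "distr (Qk y) M (\<lambda>\<omega>. \<omega> 0) = return M y"
proof (rule measure_eqI)
  note sQ = Qk_sets[OF y]
  show "sets (distr (Qk y) M (\<lambda>\<omega>. \<omega> 0)) = sets (return M y)" by simp
  fix A assume "A \<in> sets (distr (Qk y) M (\<lambda>\<omega>. \<omega> 0))"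
  then have A: "A \<in> sets M" by simp
  have "emeasure (distr (Qk y) M (\<lambda>\<omega>. \<omega> 0)) A = emeasure (Qk y) {\<omega>\<in>space PS. \<forall>i<1. \<omega> i \<in> A}"
    using A sets_eq_imp_space_eq[OF sQ]
    by (subst emeasure_distr) (auto simp: measurable_cong_sets[OF sQ refl] intro!: arg_cong2[where f=emeasure])
  also have "\<dots> = emeasure (fdd 1 (Qk y)) (Pi\<^sub>E {0..<1::nat} (\<lambda>_. A))"
    using A by (subst fdd_rect[OF sQ]) auto
  also have "\<dots> = emeasure (return (Pi\<^sub>M {0..<1::nat} (\<lambda>_. M)) ((\<lambda>_. undefined)(0 := y))) (Pi\<^sub>E {0..<1::nat} (\<lambda>_. A))"
    unfolding Qk_fdd[OF y] C01[OF y] ..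
  also have "\<dots> = indicator (Pi\<^sub>E {0..<1::nat} (\<lambda>_. A)) ((\<lambda>_. undefined)(0 := y))"
    using A by (intro emeasure_return sets_PiM_I_finite) auto
  also have "\<dots> = emeasure (return M y) A"
    using A by (auto simp: indicator_def PiE_iff extensional_def)
  finally show "emeasure (distr (Qk y) M (\<lambda>\<omega>. \<omega> 0)) A = emeasure (return M y) A" .
qed

lemma eP_indep:
  assumes y: "y \<in> space M" and y': "y' \<in> space M"
  shows "Ionescu_Tulcea.eP (ITP y) (\<lambda>_. M) (Suc m) = Ionescu_Tulcea.eP (ITP y') (\<lambda>_. M) (Suc m)"
proof -
  interpret IT: Ionescu_Tulcea "ITP y" "\<lambda>_. M" by (rule IT_loc[OF y])
  interpret IT': Ionescu_Tulcea "ITP y'" "\<lambda>_. M" by (rule IT_loc[OF y'])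
  show ?thesis by (simp add: IT.eP_def IT'.eP_def ITP_def fun_eq_iff)
qed

lemma C_indep:
  assumes y: "y \<in> space M" and y': "y' \<in> space M"
  shows "Ionescu_Tulcea.C (ITP y) (\<lambda>_. M) (Suc k) n = Ionescu_Tulcea.C (ITP y') (\<lambda>_. M) (Suc k) n"
proof -
  interpret IT: Ionescu_Tulcea "ITP y" "\<lambda>_. M" by (rule IT_loc[OF y])
  interpret IT': Ionescu_Tulcea "ITP y'" "\<lambda>_. M" by (rule IT_loc[OF y'])
  show ?thesis
  proof (induction n)
    case 0 show ?case by (simp add: fun_eq_iff)
  next
    case (Suc n) show ?case
      by (rule ext) (simp add: Suc.IH eP_indep[OF y y'])
  qed
qed

lemma Qk_C1: assumes y: "y \<in> space M" and X: "X \<in> sets (Pi\<^sub>M {0..<Suc n} (\<lambda>_. M))"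
  shows "emeasure (Qk y) (prod_emb UNIV (\<lambda>_. M) {0..<Suc n} X)
       = emeasure (Ionescu_Tulcea.C (ITP y) (\<lambda>_. M) 1 n ((\<lambda>_. undefined)(0 := y))) X"
proof -
  interpret IT: Ionescu_Tulcea "ITP y" "\<lambda>_. M" by (rule IT_loc[OF y])
  have v: "(\<lambda>_. undefined)(0 := y) \<in> space (Pi\<^sub>M {0..<1::nat} (\<lambda>_. M))"
    using y by (auto simp: space_PiM PiE_iff extensional_def)
  have "emeasure (Qk y) (prod_emb UNIV (\<lambda>_. M) {0..<Suc n} X) = emeasure (fdd (Suc n) (Qk y)) X"
    unfolding fdd_def by (rule emeasure_distr_restrict[symmetric, OF _ Qk_sets[OF y] X]) simp
  also have "fdd (Suc n) (Qk y) = IT.C 0 1 (\<lambda>_. undefined) \<bind> IT.C 1 n"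
    unfolding Qk_fdd[OF y] using IT.split_C[OF u0_space, of 1 n] by simp
  also have "\<dots> = IT.C 1 n ((\<lambda>_. undefined)(0 := y))"
    unfolding C01[OF y] using IT.measurable_C[of 1 n] v by (intro bind_return) auto
  finally show ?thesis .
qed

lemma Qk_meas: assumes ne: "space M \<noteq> {}" shows "Qk \<in> M \<rightarrow>\<^sub>M prob_algebra PS"
proof (rule measurable_prob_algebra_generated[OF sets_PiM Int_stable_prod_algebra prod_algebra_sets_into_space])
  fix a assume "a \<in> space M" then show "prob_space (Qk a)" "sets (Qk a) = sets PS"
    by (simp_all add: Qk_prob Qk_sets)
next
  obtain y0 where y0: "y0 \<in> space M" using ne by auto
  interpret IT0: Ionescu_Tulcea "ITP y0" "\<lambda>_. M" by (rule IT_loc[OF y0])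
  fix A assume A: "A \<in> prod_algebra (UNIV::nat set) (\<lambda>_. M)"
  then obtain J E where AJ: "A = prod_emb (UNIV::nat set) (\<lambda>_. M) J (Pi\<^sub>E J E)" and J: "finite J"
    and E: "\<And>i. i \<in> J \<Longrightarrow> E i \<in> sets M"
    by (elim prod_algebraE) auto
  obtain n where n: "J \<subseteq> {0..<Suc n}"
  proof -
    obtain k where "J \<subseteq> {..<k}" using finite_nat_bounded[OF J] by auto
    then have "J \<subseteq> {0..<Suc k}" by auto
    then show ?thesis using that by blast
  qed
  define X where "X = prod_emb {0..<Suc n} (\<lambda>_. M) J (Pi\<^sub>E J E)"
  have X: "X \<in> sets (Pi\<^sub>M {0..<Suc n} (\<lambda>_. M))"
    unfolding X_def using n E J by (intro sets_PiM_I) (auto intro!: sets_PiM_I_finite)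
  have AX: "A = prod_emb UNIV (\<lambda>_. M) {0..<Suc n} X" unfolding AJ X_def using n by simp
  have "(\<lambda>y. emeasure (IT0.C 1 n ((\<lambda>_. undefined)(0 := y))) X) \<in> borel_measurable M"
  proof (rule measurable_compose[OF _ measurable_emeasure_subprob_algebra])
    show "(\<lambda>y. IT0.C 1 n ((\<lambda>_. undefined)(0 := y))) \<in> M \<rightarrow>\<^sub>M subprob_algebra (Pi\<^sub>M {0..<1+n} (\<lambda>_. M))"
      by (rule measurable_compose[OF _ IT0.measurable_C], rule measurable_fun_upd[where J="{0..<0::nat}"])
         (auto intro: u0_space)
    show "X \<in> sets (Pi\<^sub>M {0..<1+n} (\<lambda>_. M))" using X by simp
  qed
  then show "(\<lambda>a. emeasure (Qk a) A) \<in> borel_measurable M"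
  proof (rule measurable_cong[THEN iffD1, rotated])
    fix y assume y: "y \<in> space M"
    show "emeasure (IT0.C 1 n ((\<lambda>_. undefined)(0 := y))) X = emeasure (Qk y) A"
      unfolding AX Qk_C1[OF y X] using C_indep[OF y y0, of 0 n] by (simp add: One_nat_def)
  qed
qed

end

context mrw begin

lemma cyl_sets[measurable]:
  assumes "X \<in> sets (Pi\<^sub>M {0..<Suc n} (\<lambda>_. M))"
  shows "{\<omega>\<in>space PS. restrict \<omega> {0..<Suc n} \<in> X} \<in> sets PS"
  using assms by measurable

lemma F_meas[measurable]:
  assumes "X \<in> sets (Pi\<^sub>M {0..<Suc n} (\<lambda>_. M))" and "B \<in> sets M"
  shows "(\<lambda>\<omega>. indicator {\<omega>\<in>space PS. restrict \<omega> {0..<Suc n} \<in> X} \<omega> * emeasure (K (\<omega> n)) B) \<in> borel_measurable PS"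
  using assms by measurable

context
  fixes lam :: "('x \<times> (real^2)) measure"
  assumes ne: "space M \<noteq> {}" and sl: "sets lam = sets M"
begin

lemma Qk_sub: "Qk \<in> lam \<rightarrow>\<^sub>M subprob_algebra PS"
  by (subst measurable_cong_sets[OF sl refl]) (rule measurable_prob_algebraD[OF Qk_meas[OF ne]])

lemma spl: "space lam = space M" using sets_eq_imp_space_eq[OF sl] .

lemma mix_sets: "sets (lam \<bind> Qk) = sets PS"
  using ne by (intro sets_bind[where N=PS]) (auto simp: spl Qk_sets)

lemma mix_emeasure: "A \<in> sets PS \<Longrightarrow> emeasure (lam \<bind> Qk) A = (\<integral>\<^sup>+y. emeasure (Qk y) A \<partial>lam)"
  using ne by (intro emeasure_bind[OF _ Qk_sub]) (auto simp: spl)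

lemma mix_finite: assumes "finite_measure lam" shows "finite_measure (lam \<bind> Qk)"
proof (rule finite_measureI)
  have "emeasure (lam \<bind> Qk) (space (lam \<bind> Qk)) = (\<integral>\<^sup>+y. emeasure (Qk y) (space PS) \<partial>lam)"
    using mix_emeasure[of "space PS"] sets_eq_imp_space_eq[OF mix_sets] by simp
  also have "\<dots> = (\<integral>\<^sup>+y. 1 \<partial>lam)"
  proof (rule nn_integral_cong)
    fix y assume "y \<in> space lam" hence y: "y \<in> space M" by (simp add: spl)
    show "emeasure (Qk y) (space PS) = 1"
      using prob_space.emeasure_space_1[OF Qk_prob[OF y]] sets_eq_imp_space_eq[OF Qk_sets[OF y]] by simp
  qed
  also have "\<dots> = emeasure lam (space lam)" by simp
  finally show "emeasure (lam \<bind> Qk) (space (lam \<bind> Qk)) \<noteq> \<infinity>"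
    using finite_measure.emeasure_finite[OF assms] by simp
qed

lemma mix_prob: assumes "prob_space lam" shows "prob_space (lam \<bind> Qk)"
proof (rule prob_spaceI)
  have "emeasure (lam \<bind> Qk) (space (lam \<bind> Qk)) = (\<integral>\<^sup>+y. emeasure (Qk y) (space PS) \<partial>lam)"
    using mix_emeasure[of "space PS"] sets_eq_imp_space_eq[OF mix_sets] by simp
  also have "\<dots> = (\<integral>\<^sup>+y. 1 \<partial>lam)"
  proof (rule nn_integral_cong)
    fix y assume "y \<in> space lam" hence y: "y \<in> space M" by (simp add: spl)
    show "emeasure (Qk y) (space PS) = 1"
      using prob_space.emeasure_space_1[OF Qk_prob[OF y]] sets_eq_imp_space_eq[OF Qk_sets[OF y]] by simp
  qed
  also have "\<dots> = 1" using prob_space.emeasure_space_1[OF assms] by simp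
  finally show "emeasure (lam \<bind> Qk) (space (lam \<bind> Qk)) = 1" .
qed

lemma mix_GX: "GX (lam \<bind> Qk)"
  unfolding GX_def
proof safe
  fix n X B assume X[measurable]: "X \<in> sets (Pi\<^sub>M {0..<Suc n} (\<lambda>_. M))" and B[measurable]: "B \<in> sets M"
  let ?S = "{\<omega>\<in>space PS. restrict \<omega> {0..<Suc n} \<in> X \<and> \<omega> (Suc n) \<in> B}"
  let ?F = "\<lambda>\<omega>. indicator {\<omega>\<in>space PS. restrict \<omega> {0..<Suc n} \<in> X} \<omega> * emeasure (K (\<omega> n)) B"
  have S: "?S \<in> sets PS" by measurable
  have "emeasure (lam \<bind> Qk) ?S = (\<integral>\<^sup>+y. emeasure (Qk y) ?S \<partial>lam)" by (rule mix_emeasure[OF S])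
  also have "\<dots> = (\<integral>\<^sup>+y. (\<integral>\<^sup>+\<omega>. ?F \<omega> \<partial>Qk y) \<partial>lam)"
    using Qk_GX X B unfolding GX_def by (intro nn_integral_cong) (simp add: spl)
  also have "\<dots> = (\<integral>\<^sup>+\<omega>. ?F \<omega> \<partial>(lam \<bind> Qk))"
    by (rule nn_integral_bind[symmetric, OF F_meas[OF X B] Qk_sub])
  finally show "emeasure (lam \<bind> Qk) ?S = (\<integral>\<^sup>+\<omega>. ?F \<omega> \<partial>(lam \<bind> Qk))" .
qed

lemma mix_init: "distr (lam \<bind> Qk) M (\<lambda>\<omega>. \<omega> 0) = lam"
proof (rule measure_eqI)
  show "sets (distr (lam \<bind> Qk) M (\<lambda>\<omega>. \<omega> 0)) = sets lam" by (simp add: sl)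
  fix A assume "A \<in> sets (distr (lam \<bind> Qk) M (\<lambda>\<omega>. \<omega> 0))"
  then have A[measurable]: "A \<in> sets M" by simp
  have "emeasure (distr (lam \<bind> Qk) M (\<lambda>\<omega>. \<omega> 0)) A = emeasure (lam \<bind> Qk) ((\<lambda>\<omega>. \<omega> 0) -` A \<inter> space PS)"
    using sets_eq_imp_space_eq[OF mix_sets]
    by (subst emeasure_distr) (auto simp: measurable_cong_sets[OF mix_sets refl])
  also have "\<dots> = (\<integral>\<^sup>+y. emeasure (Qk y) ((\<lambda>\<omega>. \<omega> 0) -` A \<inter> space PS) \<partial>lam)"
    by (rule mix_emeasure) measurable
  also have "\<dots> = (\<integral>\<^sup>+y. indicator A y \<partial>lam)"
  proof (rule nn_integral_cong)
    fix y assume y: "y \<in> space lam"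
    then have y: "y \<in> space M" by (simp add: spl)
    have "emeasure (Qk y) ((\<lambda>\<omega>. \<omega> 0) -` A \<inter> space PS) = emeasure (distr (Qk y) M (\<lambda>\<omega>. \<omega> 0)) A"
      using sets_eq_imp_space_eq[OF Qk_sets[OF y]]
      by (subst emeasure_distr) (auto simp: measurable_cong_sets[OF Qk_sets[OF y] refl])
    also have "\<dots> = indicator A y" unfolding Qk_init[OF y] using A by simp
    finally show "emeasure (Qk y) ((\<lambda>\<omega>. \<omega> 0) -` A \<inter> space PS) = indicator A y" .
  qed
  also have "\<dots> = emeasure lam A" using A sl by simp
  finally show "emeasure (distr (lam \<bind> Qk) M (\<lambda>\<omega>. \<omega> 0)) A = emeasure lam A" .
qed

lemma chain_is_mix:
  assumes fl: "finite_measure lam" and fP: "finite_measure P" and sP: "sets P = sets PS"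
    and R: "RECT P" and init: "distr P M (\<lambda>\<omega>. \<omega> 0) = lam"
  shows "P = lam \<bind> Qk"
  by (rule chain_unique[OF fP sP mix_finite[OF fl] mix_sets]) (simp_all add: init mix_init R GX_RECT[OF mix_GX])

end

end

lemma prob_fin: "prob_space P \<Longrightarrow> finite_measure P"
  by (rule finite_measureI) (simp add: prob_space.emeasure_space_1)

context mrw begin

lemma rect_eq: "{\<omega>\<in>space PS. \<forall>i\<le>n. \<omega> i \<in> A i} = {\<omega>\<in>space PS. restrict \<omega> {0..<Suc n} \<in> Pi\<^sub>E {0..<Suc n} A}"
  by (auto simp: PiE_iff less_Suc_eq_le)

lemma rect_sets[measurable]: assumes "\<And>i. A i \<in> sets M" shows "{\<omega>\<in>space PS. \<forall>i\<le>n. \<omega> i \<in> A i} \<in> sets PS"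
proof -
  have "Pi\<^sub>E {0..<Suc n} A \<in> sets (Pi\<^sub>M {0..<Suc n} (\<lambda>_. M))" using assms by (intro sets_PiM_I_finite) auto
  then show ?thesis unfolding rect_eq by (rule cyl_sets)
qed

lemma rect2_sets[measurable]: assumes "\<And>i. A i \<in> sets M" "B \<in> sets M"
  shows "{\<omega>\<in>space PS. (\<forall>i\<le>n. \<omega> i \<in> A i) \<and> \<omega> (Suc n) \<in> B} \<in> sets PS"
proof -
  have "{\<omega>\<in>space PS. (\<forall>i\<le>n. \<omega> i \<in> A i) \<and> \<omega> (Suc n) \<in> B} = {\<omega>\<in>space PS. \<forall>i\<le>n. \<omega> i \<in> A i} \<inter> {\<omega>\<in>space PS. \<omega> (Suc n) \<in> B}"
    by auto
  also have "\<dots> \<in> sets PS" using assms rect_sets[OF assms(1)] by measurable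
  finally show ?thesis .
qed

lemma Kmeasure_meas[measurable]: assumes "B \<in> sets M" shows "(\<lambda>y. measure (K y) B) \<in> borel_measurable M"
  using measurable_compose[OF K_kernel measurable_measure_prob_algebra[OF assms]] by simp

lemma nn_int_conv:
  assumes pP: "prob_space P" and sP: "sets P = sets PS" and C: "C \<in> sets PS" and B: "B \<in> sets M"
  shows "(\<integral>\<^sup>+\<omega>. indicator C \<omega> * emeasure (K (\<omega> n)) B \<partial>P) = ennreal (\<integral>\<omega>. indicator C \<omega> * measure (K (\<omega> n)) B \<partial>P)"
proof -
  interpret prob_space P by fact
  have m: "(\<lambda>\<omega>. indicator C \<omega> * measure (K (\<omega> n)) B) \<in> borel_measurable P"
    unfolding measurable_cong_sets[OF sP refl] using C B by measurable
  have "(\<integral>\<^sup>+\<omega>. indicator C \<omega> * emeasure (K (\<omega> n)) B \<partial>P) = (\<integral>\<^sup>+\<omega>. ennreal (indicator C \<omega> * measure (K (\<omega> n)) B) \<partial>P)"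
  proof (rule nn_integral_cong)
    fix \<omega> assume "\<omega> \<in> space P"
    then have "\<omega> n \<in> space M" using sets_eq_imp_space_eq[OF sP] by (auto simp: space_PiM)
    then have "emeasure (K (\<omega> n)) B = ennreal (measure (K (\<omega> n)) B)"
      using finite_measure.emeasure_eq_measure[OF prob_fin[OF K_prob]] by blast
    then show "indicator C \<omega> * emeasure (K (\<omega> n)) B = ennreal (indicator C \<omega> * measure (K (\<omega> n)) B)"
      by (simp add: ennreal_mult indicator_def)
  qed
  also have "\<dots> = ennreal (\<integral>\<omega>. indicator C \<omega> * measure (K (\<omega> n)) B \<partial>P)"
  proof (rule nn_integral_eq_integral)
    show "integrable P (\<lambda>\<omega>. indicator C \<omega> * measure (K (\<omega> n)) B)"
    proof (rule integrable_const_bound[where B=1])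
      show "AE x in P. norm (indicator C x * measure (K (x n)) B) \<le> 1"
      proof (rule AE_I2)
        fix \<omega> assume "\<omega> \<in> space P"
        then have "\<omega> n \<in> space M" using sets_eq_imp_space_eq[OF sP] by (auto simp: space_PiM)
        then have "measure (K (\<omega> n)) B \<le> 1" "0 \<le> measure (K (\<omega> n)) B"
          using prob_space.prob_le_1[OF K_prob] by auto
        then show "norm (indicator C \<omega> * measure (K (\<omega> n)) B) \<le> 1" by (auto simp: indicator_def)
      qed
    qed (rule m)
  qed (auto simp: indicator_def)
  finally show ?thesis .
qed

lemma is_chain_RECT: assumes "is_chain_law Xs K \<nu> P" shows "RECT P"
proof -
  have pP: "prob_space P" and sP: "sets P = sets PS"
    using assms by (auto simp: is_chain_law_def path_space_eq)
  interpret prob_space P by fact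
  have spP: "space P = space PS" using sets_eq_imp_space_eq[OF sP] .
  show ?thesis unfolding RECT_def
  proof safe
    fix n and A :: "nat \<Rightarrow> _" and B assume A: "\<forall>i. A i \<in> sets M" and B: "B \<in> sets M"
    have "measure P {\<omega>\<in>space PS. (\<forall>i\<le>n. \<omega> i \<in> A i) \<and> \<omega> (Suc n) \<in> B} = (\<integral>\<omega>. indicator {\<omega>\<in>space PS. \<forall>i\<le>n. \<omega> i \<in> A i} \<omega> * measure (K (\<omega> n)) B \<partial>P)"
      using assms A B unfolding is_chain_law_def spP by blast
    then show "emeasure P {\<omega>\<in>space PS. (\<forall>i\<le>n. \<omega> i \<in> A i) \<and> \<omega> (Suc n) \<in> B} =
      (\<integral>\<^sup>+\<omega>. indicator {\<omega>\<in>space PS. \<forall>i\<le>n. \<omega> i \<in> A i} \<omega> * emeasure (K (\<omega> n)) B \<partial>P)"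
      using A B by (simp add: nn_int_conv[OF pP sP _ B] emeasure_eq_measure)
  qed
qed

lemma mix_is_chain:
  assumes ne: "space M \<noteq> {}" and pn: "prob_space \<nu>" and sn: "sets \<nu> = sets M"
  shows "is_chain_law Xs K \<nu> (\<nu> \<bind> Qk)"
proof -
  note pP = mix_prob[OF ne sn pn] and sP = mix_sets[OF ne sn]
  interpret prob_space "\<nu> \<bind> Qk" by fact
  have spP: "space (\<nu> \<bind> Qk) = space PS" using sets_eq_imp_space_eq[OF sP] .
  have R: "RECT (\<nu> \<bind> Qk)" by (rule GX_RECT[OF mix_GX[OF ne sn]])
  show ?thesis unfolding is_chain_law_def path_space_eq spP
  proof (intro conjI allI impI)
    show "prob_space (\<nu> \<bind> Qk)" by fact
    show "sets (\<nu> \<bind> Qk) = sets PS" by fact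
    show "distr (\<nu> \<bind> Qk) M (\<lambda>\<omega>. \<omega> 0) = \<nu>" by (rule mix_init[OF ne sn])
    fix n and A :: "nat \<Rightarrow> _" and B assume A: "\<forall>i. A i \<in> sets M" and B: "B \<in> sets M"
    have "emeasure (\<nu> \<bind> Qk) {\<omega>\<in>space PS. (\<forall>i\<le>n. \<omega> i \<in> A i) \<and> \<omega> (Suc n) \<in> B} =
      (\<integral>\<^sup>+\<omega>. indicator {\<omega>\<in>space PS. \<forall>i\<le>n. \<omega> i \<in> A i} \<omega> * emeasure (K (\<omega> n)) B \<partial>(\<nu> \<bind> Qk))"
      using R A B unfolding RECT_def by blast
    then have "ennreal (measure (\<nu> \<bind> Qk) {\<omega>\<in>space PS. (\<forall>i\<le>n. \<omega> i \<in> A i) \<and> \<omega> (Suc n) \<in> B}) =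
      ennreal (\<integral>\<omega>. indicator {\<omega>\<in>space PS. \<forall>i\<le>n. \<omega> i \<in> A i} \<omega> * measure (K (\<omega> n)) B \<partial>(\<nu> \<bind> Qk))"
      using A B by (simp add: nn_int_conv[OF pP sP _ B] emeasure_eq_measure)
    moreover have "0 \<le> (\<integral>\<omega>. indicator {\<omega>\<in>space PS. \<forall>i\<le>n. \<omega> i \<in> A i} \<omega> * measure (K (\<omega> n)) B \<partial>(\<nu> \<bind> Qk))"
      by (intro integral_nonneg_AE AE_I2) auto
    ultimately show "measure (\<nu> \<bind> Qk) {\<omega>\<in>space PS. (\<forall>i\<le>n. \<omega> i \<in> A i) \<and> \<omega> (Suc n) \<in> B} =
      (\<integral>\<omega>. indicator {\<omega>\<in>space PS. \<forall>i\<le>n. \<omega> i \<in> A i} \<omega> * measure (K (\<omega> n)) B \<partial>(\<nu> \<bind> Qk))"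
      by simp
  qed
qed

lemma chain_law_eq:
  assumes ne: "space M \<noteq> {}" and pn: "prob_space \<nu>" and sn: "sets \<nu> = sets M"
  shows "chain_law Xs K \<nu> = \<nu> \<bind> Qk"
  unfolding chain_law_def
proof (rule the_equality)
  show "is_chain_law Xs K \<nu> (\<nu> \<bind> Qk)" by (rule mix_is_chain[OF assms])
  fix P assume P: "is_chain_law Xs K \<nu> P"
  then have pP: "prob_space P" and sP: "sets P = sets PS" and init: "distr P M (\<lambda>\<omega>. \<omega> 0) = \<nu>"
    by (auto simp: is_chain_law_def path_space_eq)
  show "P = \<nu> \<bind> Qk"
    by (rule chain_is_mix[OF ne sn prob_fin[OF pn] prob_fin[OF pP] sP is_chain_RECT[OF P] init])
qed

end

definition pshift :: "nat \<Rightarrow> (nat \<Rightarrow> 'a) \<Rightarrow> (nat \<Rightarrow> 'a)" where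
  "pshift n \<omega> = (\<lambda>i. \<omega> (n + i))"

context mrw begin

lemma pshift_meas[measurable]: "pshift n \<in> PS \<rightarrow>\<^sub>M PS"
  unfolding pshift_def
  by (rule measurable_PiM_single') (auto simp: space_PiM PiE_iff)

lemma Qk_emeasure_meas[measurable]:
  assumes ne: "space M \<noteq> {}" and G: "G \<in> sets PS"
  shows "(\<lambda>y. emeasure (Qk y) G) \<in> borel_measurable M"
  using measurable_compose[OF measurable_prob_algebraD[OF Qk_meas[OF ne]] measurable_emeasure_subprob_algebra[OF G]] .

lemma markov:
  assumes ne: "space M \<noteq> {}" and fP: "finite_measure P" and sP: "sets P = sets PS" and GP: "GX P"
    and X[measurable]: "X \<in> sets (Pi\<^sub>M {0..<Suc n} (\<lambda>_. M))" and G[measurable]: "G \<in> sets PS"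
  shows "emeasure P ({\<omega>\<in>space PS. restrict \<omega> {0..<Suc n} \<in> X} \<inter> pshift n -` G)
       = (\<integral>\<^sup>+\<omega>. indicator {\<omega>\<in>space PS. restrict \<omega> {0..<Suc n} \<in> X} \<omega> * emeasure (Qk (\<omega> n)) G \<partial>P)"
proof -
  define C where "C = {\<omega>\<in>space PS. restrict \<omega> {0..<Suc n} \<in> X}"
  have C[measurable]: "C \<in> sets PS" unfolding C_def by measurable
  have spP: "space P = space PS" using sets_eq_imp_space_eq[OF sP] .
  note mP = measurable_cong_sets[OF sP refl]
  define D where "D = density P (indicator C)"
  have sD: "sets D = sets PS" by (simp add: D_def sP)
  note mD = measurable_cong_sets[OF sD refl]
  have spD: "space D = space PS" using sets_eq_imp_space_eq[OF sD] .
  interpret fP: finite_measure P by fact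
  have fD: "finite_measure D"
  proof (rule finite_measureI)
    have "emeasure D (space D) = (\<integral>\<^sup>+x. indicator C x * indicator (space PS) x \<partial>P)"
      unfolding spD unfolding D_def by (rule emeasure_density) (simp_all add: mP sP)
    also have "\<dots> = (\<integral>\<^sup>+x. indicator C x \<partial>P)" by (intro nn_integral_cong) (auto simp: indicator_def spP)
    also have "\<dots> = emeasure P C" using C sP by simp
    also have "\<dots> \<noteq> \<infinity>" using fP.emeasure_finite by simp
    finally show "emeasure D (space D) \<noteq> \<infinity>" .
  qed
  have Dm: "emeasure D S = emeasure P (C \<inter> S)" if S: "S \<in> sets PS" for S
  proof -
    have "emeasure D S = (\<integral>\<^sup>+x. indicator C x * indicator S x \<partial>P)"
      unfolding D_def by (rule emeasure_density) (simp_all add: mP sP S)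
    also have "\<dots> = (\<integral>\<^sup>+x. indicator (C \<inter> S) x \<partial>P)" by (intro nn_integral_cong) (auto simp: indicator_def)
    also have "\<dots> = emeasure P (C \<inter> S)" using C S sP by simp
    finally show ?thesis .
  qed
  define L where "L = distr D PS (pshift n)"
  define lam where "lam = distr D M (\<lambda>\<omega>. \<omega> n)"
  have sL: "sets L = sets PS" by (simp add: L_def)
  have sl: "sets lam = sets M" by (simp add: lam_def)
  have fL: "finite_measure L" unfolding L_def
    by (rule finite_measure.finite_measure_distr[OF fD]) (simp add: mD)
  have fl: "finite_measure lam" unfolding lam_def
    by (rule finite_measure.finite_measure_distr[OF fD]) (simp add: mD)
  have initL: "distr L M (\<lambda>\<omega>. \<omega> 0) = lam"
    unfolding L_def lam_def by (subst distr_distr) (auto simp: mD comp_def pshift_def)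
  have RL: "RECT L" unfolding RECT_def
  proof safe
    fix m and A :: "nat \<Rightarrow> _" and B assume A[measurable]: "\<forall>i. A i \<in> sets M" and B[measurable]: "B \<in> sets M"
    have Ai[measurable]: "A i \<in> sets M" for i using A by auto
    define X' where "X' = {x\<in>space (Pi\<^sub>M {0..<Suc (n+m)} (\<lambda>_. M)). restrict x {0..<Suc n} \<in> X \<and> (\<forall>i\<le>m. x (n + i) \<in> A i)}"
    have X'[measurable]: "X' \<in> sets (Pi\<^sub>M {0..<Suc (n+m)} (\<lambda>_. M))"
    proof -
      have "X' = {x\<in>space (Pi\<^sub>M {0..<Suc (n+m)} (\<lambda>_. M)). restrict x {0..<Suc n} \<in> X} \<inter>
                 (\<Inter>i\<in>{..m}. {x\<in>space (Pi\<^sub>M {0..<Suc (n+m)} (\<lambda>_. M)). x (n + i) \<in> A i})"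
        unfolding X'_def by auto
      also have "\<dots> \<in> sets (Pi\<^sub>M {0..<Suc (n+m)} (\<lambda>_. M))"
      proof (intro sets.Int sets.finite_INT)
        show "{x\<in>space (Pi\<^sub>M {0..<Suc (n+m)} (\<lambda>_. M)). restrict x {0..<Suc n} \<in> X} \<in> sets (Pi\<^sub>M {0..<Suc (n+m)} (\<lambda>_. M))"
        proof -
          have "(\<lambda>x. restrict x {0..<Suc n}) \<in> Pi\<^sub>M {0..<Suc (n+m)} (\<lambda>_. M) \<rightarrow>\<^sub>M Pi\<^sub>M {0..<Suc n} (\<lambda>_. M)"
            by (rule measurable_restrict_subset) auto
          from measurable_sets[OF this X]
          show ?thesis by (simp add: vimage_def Int_def conj_commute)
        qed
        fix i assume "i \<in> {..m}"
        then show "{x\<in>space (Pi\<^sub>M {0..<Suc (n+m)} (\<lambda>_. M)). x (n + i) \<in> A i} \<in> sets (Pi\<^sub>M {0..<Suc (n+m)} (\<lambda>_. M))"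
        proof -
          have "(\<lambda>x. x (n + i)) \<in> Pi\<^sub>M {0..<Suc (n+m)} (\<lambda>_. M) \<rightarrow>\<^sub>M M"
            using \<open>i \<in> {..m}\<close> by (intro measurable_component_singleton) auto
          from measurable_sets[OF this Ai]
          show ?thesis by (simp add: vimage_def Int_def conj_commute)
        qed
      qed auto
      finally show ?thesis .
    qed
    define R where "R = {\<omega>\<in>space PS. \<forall>i\<le>m. \<omega> i \<in> A i}"
    have R[measurable]: "R \<in> sets PS" unfolding R_def by measurable
    have "emeasure L {\<omega>\<in>space PS. (\<forall>i\<le>m. \<omega> i \<in> A i) \<and> \<omega> (Suc m) \<in> B}
        = emeasure D (pshift n -` {\<omega>\<in>space PS. (\<forall>i\<le>m. \<omega> i \<in> A i) \<and> \<omega> (Suc m) \<in> B} \<inter> space D)"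
      unfolding L_def by (rule emeasure_distr) (simp_all add: mD)
    also have "\<dots> = emeasure P (C \<inter> (pshift n -` {\<omega>\<in>space PS. (\<forall>i\<le>m. \<omega> i \<in> A i) \<and> \<omega> (Suc m) \<in> B} \<inter> space PS))"
      unfolding spD by (rule Dm) (rule measurable_sets[OF pshift_meas], measurable)
    also have "C \<inter> (pshift n -` {\<omega>\<in>space PS. (\<forall>i\<le>m. \<omega> i \<in> A i) \<and> \<omega> (Suc m) \<in> B} \<inter> space PS)
        = {\<omega>\<in>space PS. restrict \<omega> {0..<Suc (n+m)} \<in> X' \<and> \<omega> (Suc (n+m)) \<in> B}"
    proof -
      have r: "restrict (restrict \<omega> {0..<Suc (n + m)}) {0..<Suc n} = restrict \<omega> {0..<Suc n}" for \<omega> :: "nat \<Rightarrow> _"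
        by (auto simp: fun_eq_iff)
      show ?thesis
        unfolding C_def X'_def pshift_def
        by (auto simp: r space_PiM PiE_iff)
    qed
    also have "emeasure P \<dots> = (\<integral>\<^sup>+\<omega>. indicator {\<omega>\<in>space PS. restrict \<omega> {0..<Suc (n+m)} \<in> X'} \<omega> * emeasure (K (\<omega> (n+m))) B \<partial>P)"
      using GP X' B unfolding GX_def by blast
    also have "\<dots> = (\<integral>\<^sup>+\<omega>. indicator C \<omega> * (indicator R (pshift n \<omega>) * emeasure (K (pshift n \<omega> m)) B) \<partial>P)"
    proof (rule nn_integral_cong)
      fix \<omega> assume "\<omega> \<in> space P"
      then have \<omega>: "\<omega> \<in> space PS" by (simp add: spP)
      have r: "restrict (restrict \<omega> {0..<Suc (n + m)}) {0..<Suc n} = restrict \<omega> {0..<Suc n}"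
        by (auto simp: fun_eq_iff)
      have "pshift n \<omega> \<in> space PS" using \<omega> by (auto simp: pshift_def space_PiM)
      then show "indicator {\<omega>\<in>space PS. restrict \<omega> {0..<Suc (n+m)} \<in> X'} \<omega> * emeasure (K (\<omega> (n+m))) B =
          indicator C \<omega> * (indicator R (pshift n \<omega>) * emeasure (K (pshift n \<omega> m)) B)"
        using \<omega> unfolding C_def X'_def R_def
        by (auto simp: indicator_def r space_PiM PiE_iff pshift_def)
    qed
    also have "\<dots> = (\<integral>\<^sup>+\<omega>. indicator R (pshift n \<omega>) * emeasure (K (pshift n \<omega> m)) B \<partial>D)"
      unfolding D_def by (rule nn_integral_density[symmetric]) (simp_all add: mP)
    also have "\<dots> = (\<integral>\<^sup>+\<omega>. indicator R \<omega> * emeasure (K (\<omega> m)) B \<partial>L)"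
      unfolding L_def by (subst nn_integral_distr) (simp_all add: mD)
    finally show "emeasure L {\<omega>\<in>space PS. (\<forall>i\<le>m. \<omega> i \<in> A i) \<and> \<omega> (Suc m) \<in> B} =
       (\<integral>\<^sup>+\<omega>. indicator {\<omega>\<in>space PS. \<forall>i\<le>m. \<omega> i \<in> A i} \<omega> * emeasure (K (\<omega> m)) B \<partial>L)"
      unfolding R_def .
  qed
  have LQ: "L = lam \<bind> Qk"
    by (rule chain_is_mix[OF ne sl fl fL sL RL initL])
  have "emeasure P (C \<inter> pshift n -` G) = emeasure D (pshift n -` G \<inter> space D)"
  proof -
    have "C \<inter> pshift n -` G = C \<inter> (pshift n -` G \<inter> space PS)" using sets.sets_into_space[OF C] by auto
    then show ?thesis
      unfolding spD by (simp add: Dm measurable_sets[OF pshift_meas G])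
  qed
  also have "\<dots> = emeasure L G" unfolding L_def by (rule emeasure_distr[symmetric]) (simp_all add: mD)
  also have "\<dots> = (\<integral>\<^sup>+y. emeasure (Qk y) G \<partial>lam)" unfolding LQ by (rule mix_emeasure[OF ne sl G])
  also have "\<dots> = (\<integral>\<^sup>+\<omega>. emeasure (Qk (\<omega> n)) G \<partial>D)"
    unfolding lam_def using ne by (subst nn_integral_distr) (simp_all add: mD)
  also have "\<dots> = (\<integral>\<^sup>+\<omega>. indicator C \<omega> * emeasure (Qk (\<omega> n)) G \<partial>P)"
    unfolding D_def using ne by (subst nn_integral_density) (simp_all add: mP)
  finally show ?thesis unfolding C_def .
qed

end

definition trn :: "real^2 \<Rightarrow> 'x \<times> (real^2) \<Rightarrow> 'x \<times> (real^2)" where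
  "trn t y = (fst y, snd y + t)"

definition transl :: "real^2 \<Rightarrow> (nat \<Rightarrow> 'x \<times> (real^2)) \<Rightarrow> (nat \<Rightarrow> 'x \<times> (real^2))" where
  "transl t \<omega> = (\<lambda>i. trn t (\<omega> i))"

context mrw begin

lemma space_M: "space M = space Xs \<times> UNIV"
  by (simp add: state_space_def space_pair_measure)

lemma M_eqI:
  assumes s1: "sets N1 = sets M" and s2: "sets N2 = sets M" and f1: "finite_measure N1"
    and eq: "\<And>A B. A \<in> sets Xs \<Longrightarrow> B \<in> sets (borel :: (real^2) measure) \<Longrightarrow> emeasure N1 (A \<times> B) = emeasure N2 (A \<times> B)"
  shows "N1 = N2"
proof (rule measure_eqI_generator_eq[OF Int_stable_pair_measure_generator[of Xs "borel :: (real^2) measure"]])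
  show "{a \<times> b |a b. a \<in> sets Xs \<and> b \<in> sets borel} \<subseteq> Pow (space Xs \<times> space (borel :: (real^2) measure))"
    using sets.sets_into_space by fastforce
  show "sets N1 = sigma_sets (space Xs \<times> space borel) {a \<times> b |a b. a \<in> sets Xs \<and> b \<in> sets (borel :: (real^2) measure)}"
    using s1 by (simp add: state_space_def sets_pair_measure)
  show "sets N2 = sigma_sets (space Xs \<times> space borel) {a \<times> b |a b. a \<in> sets Xs \<and> b \<in> sets (borel :: (real^2) measure)}"
    using s2 by (simp add: state_space_def sets_pair_measure)
  show "range (\<lambda>_::nat. space Xs \<times> space (borel :: (real^2) measure)) \<subseteq> {a \<times> b |a b. a \<in> sets Xs \<and> b \<in> sets borel}"
  proof -
    have "space Xs \<times> space (borel :: (real^2) measure) \<in> {a \<times> b |a b. a \<in> sets Xs \<and> b \<in> sets borel}"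
      by (rule CollectI, rule exI[of _ "space Xs"], rule exI[of _ "space (borel :: (real^2) measure)"]) simp
    then show ?thesis by auto
  qed
  show "(\<Union>i::nat. space Xs \<times> space (borel :: (real^2) measure)) = space Xs \<times> space borel" by simp
  show "emeasure N1 (space Xs \<times> space (borel :: (real^2) measure)) \<noteq> \<infinity>" for i :: nat
    using finite_measure.emeasure_finite[OF f1, of "space Xs \<times> space (borel :: (real^2) measure)"] by (simp add: infinity_ennreal_def)
next
  fix X assume "X \<in> {a \<times> b |a b. a \<in> sets Xs \<and> b \<in> sets (borel :: (real^2) measure)}"
  then obtain a b where "X = a \<times> b" "a \<in> sets Xs" "b \<in> sets (borel :: (real^2) measure)" by blast
  then show "emeasure N1 X = emeasure N2 X" using eq by simp
qed

lemma trn_meas[measurable]: "trn t \<in> M \<rightarrow>\<^sub>M M"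
  unfolding trn_def[abs_def] state_space_def by measurable

lemma K_shift0:
  assumes x: "x \<in> space Xs" and MRW: "\<And>x s A B. x \<in> space Xs \<Longrightarrow> A \<in> sets Xs \<Longrightarrow> B \<in> sets (borel :: (real^2) measure) \<Longrightarrow>
        measure (K (x, s)) (A \<times> B) = measure (K (x, 0)) (A \<times> ((\<lambda>t. t - s) ` B))"
  shows "K (x, s) = distr (K (x, 0)) M (trn s)"
proof (rule M_eqI)
  have xs: "(x, s) \<in> space M" "(x, 0) \<in> space M" using x by (auto simp: space_M)
  show "sets (K (x, s)) = sets M" by (rule K_sets[OF xs(1)])
  show "sets (distr (K (x, 0)) M (trn s)) = sets M" by simp
  show "finite_measure (K (x, s))" by (rule prob_fin[OF K_prob[OF xs(1)]])
  fix A B assume A: "A \<in> sets Xs" and B: "B \<in> sets (borel :: (real^2) measure)"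
  have "emeasure (distr (K (x, 0)) M (trn s)) (A \<times> B) = emeasure (K (x, 0)) (trn s -` (A \<times> B) \<inter> space (K (x, 0)))"
  proof (rule emeasure_distr)
    show "A \<times> B \<in> sets M" using A B by (simp add: state_space_def pair_measureI)
  qed (simp add: measurable_cong_sets[OF K_sets[OF xs(2)] refl])
  also have "trn s -` (A \<times> B) \<inter> space (K (x, 0)) = A \<times> ((\<lambda>t. t - s) ` B)"
  proof -
    have sp: "space (K (x, 0)) = space Xs \<times> UNIV" using sets_eq_imp_space_eq[OF K_sets[OF xs(2)]] by (simp add: space_M)
    have "b \<in> (\<lambda>t. t - s) ` B \<longleftrightarrow> b + s \<in> B" for b
    proof
      assume "b + s \<in> B" then show "b \<in> (\<lambda>t. t - s) ` B" by (rule rev_image_eqI) simp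
    qed auto
    then show ?thesis using sets.sets_into_space[OF A] unfolding sp by (auto simp: trn_def)
  qed
  also have "emeasure (K (x, 0)) \<dots> = ennreal (measure (K (x, s)) (A \<times> B))"
    using MRW[OF x A B] finite_measure.emeasure_eq_measure[OF prob_fin[OF K_prob[OF xs(2)]]] by simp
  also have "\<dots> = emeasure (K (x, s)) (A \<times> B)"
    using finite_measure.emeasure_eq_measure[OF prob_fin[OF K_prob[OF xs(1)]]] by simp
  finally show "emeasure (K (x, s)) (A \<times> B) = emeasure (distr (K (x, 0)) M (trn s)) (A \<times> B)" ..
qed

lemma K_shift:
  assumes y: "y \<in> space M" and MRW: "\<And>x s A B. x \<in> space Xs \<Longrightarrow> A \<in> sets Xs \<Longrightarrow> B \<in> sets (borel :: (real^2) measure) \<Longrightarrow>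
        measure (K (x, s)) (A \<times> B) = measure (K (x, 0)) (A \<times> ((\<lambda>t. t - s) ` B))"
  shows "K (trn t y) = distr (K y) M (trn t)"
proof -
  obtain x s where y': "y = (x, s)" by (cases y)
  with y have x: "x \<in> space Xs" by (auto simp: space_M)
  have "K (trn t y) = distr (K (x, 0)) M (trn (s + t))"
  proof -
    have "trn t y = (x, s + t)" unfolding y' trn_def by simp
    then show ?thesis using K_shift0[OF x MRW, of "s + t"] by (simp only:)
  qed
  also have "\<dots> = distr (distr (K (x, 0)) M (trn s)) M (trn t)"
  proof -
    have "(x, 0) \<in> space M" using x by (simp add: space_M)
    then have "distr (distr (K (x, 0)) M (trn s)) M (trn t) = distr (K (x, 0)) M (trn t \<circ> trn s)"
      by (intro distr_distr) (simp_all add: measurable_cong_sets[OF K_sets refl])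
    moreover have "trn t \<circ> trn s = trn (s + t)" by (auto simp: fun_eq_iff trn_def add.assoc)
    ultimately show ?thesis by metis
  qed
  also have "\<dots> = distr (K y) M (trn t)" unfolding y' using K_shift0[OF x MRW, of s] by (simp only:)
  finally show ?thesis .
qed

lemma transl_meas[measurable]: "transl t \<in> PS \<rightarrow>\<^sub>M PS"
  unfolding transl_def
proof (rule measurable_PiM_single')
  fix i show "(\<lambda>\<omega>. trn t (\<omega> i)) \<in> PS \<rightarrow>\<^sub>M M"
    by (rule measurable_compose[OF measurable_component_singleton[of i UNIV "\<lambda>_. M"] trn_meas]) simp
qed (auto simp: space_PiM PiE_iff trn_def space_M mem_Times_iff)

end

context mrw begin

lemma trn_space: "y \<in> space M \<Longrightarrow> trn t y \<in> space M"
  by (auto simp: trn_def space_M mem_Times_iff)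

lemma Qk_trans:
  assumes ne: "space M \<noteq> {}" and y: "y \<in> space M"
    and MRW: "\<And>x s A B. x \<in> space Xs \<Longrightarrow> A \<in> sets Xs \<Longrightarrow> B \<in> sets (borel :: (real^2) measure) \<Longrightarrow>
        measure (K (x, s)) (A \<times> B) = measure (K (x, 0)) (A \<times> ((\<lambda>t. t - s) ` B))"
  shows "Qk (trn t y) = distr (Qk y) PS (transl t)"
proof -
  note sQ = Qk_sets[OF y]
  note mQ = measurable_cong_sets[OF sQ refl]
  have spQ: "space (Qk y) = space PS" using sets_eq_imp_space_eq[OF sQ] .
  define Q' where "Q' = distr (Qk y) PS (transl t)"
  have sQ': "sets Q' = sets PS" by (simp add: Q'_def)
  have fQ': "finite_measure Q'" unfolding Q'_def
    by (rule finite_measure.finite_measure_distr[OF prob_fin[OF Qk_prob[OF y]]]) (simp add: mQ)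
  have init: "distr Q' M (\<lambda>\<omega>. \<omega> 0) = return M (trn t y)"
  proof -
    have "distr Q' M (\<lambda>\<omega>. \<omega> 0) = distr (Qk y) M ((\<lambda>\<omega>. \<omega> 0) \<circ> transl t)"
      unfolding Q'_def by (rule distr_distr) (simp_all add: mQ)
    also have "(\<lambda>\<omega>. \<omega> 0) \<circ> transl t = trn t \<circ> (\<lambda>\<omega>. \<omega> 0)" by (simp add: fun_eq_iff transl_def)
    also have "distr (Qk y) M (trn t \<circ> (\<lambda>\<omega>. \<omega> 0)) = distr (distr (Qk y) M (\<lambda>\<omega>. \<omega> 0)) M (trn t)"
      by (rule distr_distr[symmetric]) (simp_all add: mQ)
    also have "\<dots> = return M (trn t y)" unfolding Qk_init[OF y] by (rule distr_return[OF trn_meas y])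
    finally show ?thesis .
  qed
  have RQ: "RECT (Qk y)" by (rule GX_RECT[OF Qk_GX[OF y]])
  have RQ': "RECT Q'" unfolding RECT_def
  proof safe
    fix n and A :: "nat \<Rightarrow> _" and B assume A: "\<forall>i. A i \<in> sets M" and B[measurable]: "B \<in> sets M"
    have Ai[measurable]: "A i \<in> sets M" for i using A by auto
    define A' where "A' i = trn t -` A i \<inter> space M" for i
    define B' where "B' = trn t -` B \<inter> space M"
    have A'[measurable]: "A' i \<in> sets M" for i unfolding A'_def by (rule measurable_sets[OF trn_meas Ai])
    have B'[measurable]: "B' \<in> sets M" unfolding B'_def by (rule measurable_sets[OF trn_meas B])
    have sp: "\<omega> \<in> space PS \<Longrightarrow> \<omega> i \<in> space M" for \<omega> i by (auto simp: space_PiM)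
    have trsp: "\<omega> \<in> space PS \<Longrightarrow> transl t \<omega> \<in> space PS" for \<omega>
      using measurable_space[OF transl_meas] by blast
    have "emeasure Q' {\<omega>\<in>space PS. (\<forall>i\<le>n. \<omega> i \<in> A i) \<and> \<omega> (Suc n) \<in> B}
       = emeasure (Qk y) (transl t -` {\<omega>\<in>space PS. (\<forall>i\<le>n. \<omega> i \<in> A i) \<and> \<omega> (Suc n) \<in> B} \<inter> space (Qk y))"
      unfolding Q'_def by (rule emeasure_distr) (simp_all add: mQ)
    also have "transl t -` {\<omega>\<in>space PS. (\<forall>i\<le>n. \<omega> i \<in> A i) \<and> \<omega> (Suc n) \<in> B} \<inter> space (Qk y)
       = {\<omega>\<in>space PS. (\<forall>i\<le>n. \<omega> i \<in> A' i) \<and> \<omega> (Suc n) \<in> B'}"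
      unfolding spQ A'_def B'_def using trsp sp by (auto simp: transl_def)
    also have "emeasure (Qk y) \<dots> = (\<integral>\<^sup>+\<omega>. indicator {\<omega>\<in>space PS. \<forall>i\<le>n. \<omega> i \<in> A' i} \<omega> * emeasure (K (\<omega> n)) B' \<partial>Qk y)"
      using RQ A' B' unfolding RECT_def by blast
    also have "\<dots> = (\<integral>\<^sup>+\<omega>. indicator {\<omega>\<in>space PS. \<forall>i\<le>n. \<omega> i \<in> A i} (transl t \<omega>) * emeasure (K (transl t \<omega> n)) B \<partial>Qk y)"
    proof (rule nn_integral_cong)
      fix \<omega> assume "\<omega> \<in> space (Qk y)"
      then have \<omega>: "\<omega> \<in> space PS" by (simp add: spQ)
      have Kn: "emeasure (K (transl t \<omega> n)) B = emeasure (K (\<omega> n)) B'"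
      proof -
        have "K (transl t \<omega> n) = distr (K (\<omega> n)) M (trn t)"
          unfolding transl_def by (rule K_shift[OF sp[OF \<omega>] MRW])
        moreover have "emeasure (distr (K (\<omega> n)) M (trn t)) B = emeasure (K (\<omega> n)) (trn t -` B \<inter> space (K (\<omega> n)))"
          by (rule emeasure_distr) (simp_all add: measurable_cong_sets[OF K_sets[OF sp[OF \<omega>]] refl])
        moreover have "space (K (\<omega> n)) = space M" using sets_eq_imp_space_eq[OF K_sets[OF sp[OF \<omega>]]] .
        ultimately show ?thesis unfolding B'_def by simp
      qed
      show "indicator {\<omega>\<in>space PS. \<forall>i\<le>n. \<omega> i \<in> A' i} \<omega> * emeasure (K (\<omega> n)) B' =
            indicator {\<omega>\<in>space PS. \<forall>i\<le>n. \<omega> i \<in> A i} (transl t \<omega>) * emeasure (K (transl t \<omega> n)) B"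
        unfolding Kn using \<omega> trsp[OF \<omega>] sp[OF \<omega>] by (auto simp: indicator_def A'_def transl_def)
    qed
    also have "\<dots> = (\<integral>\<^sup>+\<omega>. indicator {\<omega>\<in>space PS. \<forall>i\<le>n. \<omega> i \<in> A i} \<omega> * emeasure (K (\<omega> n)) B \<partial>Q')"
      unfolding Q'_def by (rule nn_integral_distr[symmetric]) (simp_all add: mQ)
    finally show "emeasure Q' {\<omega>\<in>space PS. (\<forall>i\<le>n. \<omega> i \<in> A i) \<and> \<omega> (Suc n) \<in> B} =
      (\<integral>\<^sup>+\<omega>. indicator {\<omega>\<in>space PS. \<forall>i\<le>n. \<omega> i \<in> A i} \<omega> * emeasure (K (\<omega> n)) B \<partial>Q')" .
  qed
  have sr: "sets (return M (trn t y)) = sets M" by simp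
  have "Q' = return M (trn t y) \<bind> Qk"
    by (rule chain_is_mix[OF ne sr prob_fin[OF prob_space_return[OF trn_space[OF y]]] fQ' sQ' RQ' init])
  also have "\<dots> = Qk (trn t y)"
    by (rule bind_return[OF measurable_prob_algebraD[OF Qk_meas[OF ne]] trn_space[OF y]])
  finally show ?thesis unfolding Q'_def ..
qed

end

lemma quad_lemma:
  fixes E2 e p :: real
  assumes "\<And>l. 0 \<le> E2 - 2 * l * e + l^2 * p" and "0 \<le> p"
  shows "e^2 \<le> p * E2"
proof (cases "p = 0")
  case True
  have "e = 0"
  proof (rule ccontr)
    assume "e \<noteq> 0"
    have "0 \<le> E2 - 2 * ((E2 + 1) / (2 * e)) * e" using assms(1)[of "(E2 + 1) / (2 * e)"] True by simp
    also have "\<dots> = -1" using \<open>e \<noteq> 0\<close> by (simp add: field_simps)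
    finally show False by simp
  qed
  then show ?thesis using True by simp
next
  case False
  then have p: "p > 0" using assms(2) by simp
  have "0 \<le> E2 - 2 * (e / p) * e + (e / p)^2 * p" by (rule assms(1))
  also have "\<dots> = E2 - e^2 / p" using p by (simp add: field_simps power2_eq_square)
  finally have "e^2 / p \<le> E2" by simp
  then show ?thesis using p by (simp add: field_simps)
qed

lemma double_sum_sym_le:
  fixes f :: "nat \<Rightarrow> nat \<Rightarrow> real"
  assumes "finite I" and nn: "\<And>i j. 0 \<le> f i j" and sym: "\<And>i j. f i j = f j i"
  shows "(\<Sum>i\<in>I. \<Sum>j\<in>I. f i j) \<le> 2 * (\<Sum>i\<in>I. \<Sum>j\<in>I. if i \<le> j then f i j else 0)"
proof -
  have "(\<Sum>i\<in>I. \<Sum>j\<in>I. f i j) \<le> (\<Sum>i\<in>I. \<Sum>j\<in>I. (if i \<le> j then f i j else 0) + (if j \<le> i then f i j else 0))"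
    by (intro sum_mono) (auto simp: nn)
  also have "\<dots> = (\<Sum>i\<in>I. \<Sum>j\<in>I. if i \<le> j then f i j else 0) + (\<Sum>i\<in>I. \<Sum>j\<in>I. if j \<le> i then f i j else 0)"
    by (simp add: sum.distrib)
  also have "(\<Sum>i\<in>I. \<Sum>j\<in>I. if j \<le> i then f i j else 0) = (\<Sum>j\<in>I. \<Sum>i\<in>I. if j \<le> i then f i j else 0)"
    by (rule sum.swap)
  also have "\<dots> = (\<Sum>i\<in>I. \<Sum>j\<in>I. if i \<le> j then f i j else 0)"
    by (intro sum.cong refl) (metis sym)
  finally show ?thesis by simp
qed

lemma inner_sum_le:
  fixes f :: "nat \<Rightarrow> nat \<Rightarrow> real"
  assumes nn: "\<And>i j. 0 \<le> f i j" and i: "i \<le> N"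
  shows "(\<Sum>j\<in>{m..N}. if i \<le> j then f i j else 0) \<le> f i i + (\<Sum>k\<in>{1..N}. f i (i + k))"
proof -
  have "(\<Sum>j\<in>{m..N}. if i \<le> j then f i j else 0) \<le> (\<Sum>j\<in>{i..N}. f i j)"
  proof -
    have "(\<Sum>j\<in>{m..N}. if i \<le> j then f i j else 0) = (\<Sum>j\<in>{j\<in>{m..N}. i \<le> j}. f i j)"
      by (rule sum.inter_filter[symmetric]) simp
    also have "\<dots> \<le> (\<Sum>j\<in>{i..N}. f i j)" by (rule sum_mono2) (auto simp: nn)
    finally show ?thesis .
  qed
  also have "(\<Sum>j\<in>{i..N}. f i j) = (\<Sum>k\<in>{0..N - i}. f i (k + i))"
    using sum.shift_bounds_cl_nat_ivl[of "f i" 0 i "N - i"] i by simp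
  also have "\<dots> \<le> (\<Sum>k\<in>{0..N}. f i (k + i))" by (rule sum_mono2) (auto simp: nn)
  also have "\<dots> = f i i + (\<Sum>k\<in>{1..N}. f i (i + k))"
    by (simp add: sum.atLeast_Suc_atMost add.commute)
  finally show ?thesis .
qed

lemma (in prob_space) second_moment:
  assumes A: "\<And>i. A i \<in> events" and I: "finite I"
  shows "(\<Sum>i\<in>I. prob (A i))^2 \<le> prob (\<Union>i\<in>I. A i) * (\<Sum>i\<in>I. \<Sum>j\<in>I. prob (A i \<inter> A j))"
proof -
  define Z where "Z \<omega> = (\<Sum>i\<in>I. indicator (A i) \<omega> :: real)" for \<omega>
  define U where "U = (\<Union>i\<in>I. A i)"
  have U: "U \<in> events" unfolding U_def using A I by auto
  have intI: "integrable M (indicator B :: _ \<Rightarrow> real)" if "B \<in> events" for B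
    using that by (intro integrable_real_indicator) (simp_all add: emeasure_eq_measure)
  have intZ: "integrable M Z" unfolding Z_def by (auto intro!: intI A)
  have Z2: "(Z \<omega>)^2 = (\<Sum>i\<in>I. \<Sum>j\<in>I. indicator (A i \<inter> A j) \<omega>)" for \<omega>
    unfolding Z_def power2_eq_square sum_product by (simp add: indicator_inter_arith)
  have intZ2: "integrable M (\<lambda>\<omega>. (Z \<omega>)^2)" 
  proof -
    have "integrable M (indicator (A i \<inter> A j) :: _ \<Rightarrow> real)" for i j using A by (intro intI) auto
    then show ?thesis unfolding Z2 by simp
  qed
  have EZ: "(\<integral>\<omega>. Z \<omega> \<partial>M) = (\<Sum>i\<in>I. prob (A i))"
    unfolding Z_def using A by (subst Bochner_Integration.integral_sum) (auto intro: intI)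
  have EZ2: "(\<integral>\<omega>. (Z \<omega>)^2 \<partial>M) = (\<Sum>i\<in>I. \<Sum>j\<in>I. prob (A i \<inter> A j))"
    unfolding Z2 using A by (subst Bochner_Integration.integral_sum, force intro: intI)+ (auto simp: Int_absorb2 sets.sets_into_space)
  have ZU: "Z \<omega> * indicator U \<omega> = Z \<omega>" for \<omega>
    unfolding Z_def U_def by (auto simp: indicator_def intro!: sum.neutral)
  have quad: "0 \<le> (\<integral>\<omega>. (Z \<omega>)^2 \<partial>M) - 2 * l * (\<integral>\<omega>. Z \<omega> \<partial>M) + l^2 * prob U" for l
  proof -
    have eq: "(Z \<omega> - l * indicator U \<omega>)^2 = (Z \<omega>)^2 - 2 * l * Z \<omega> + l^2 * indicator U \<omega>" for \<omega>
    proof -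
      have "(Z \<omega> - l * indicator U \<omega>)^2 = (Z \<omega>)^2 - 2 * l * (Z \<omega> * indicator U \<omega>) + l^2 * (indicator U \<omega>)^2"
        by (simp add: power2_eq_square algebra_simps)
      also have "(indicator U \<omega> :: real)^2 = indicator U \<omega>" by (simp add: indicator_def)
      finally show ?thesis by (simp add: ZU)
    qed
    have "0 \<le> (\<integral>\<omega>. (Z \<omega> - l * indicator U \<omega>)^2 \<partial>M)" by (rule integral_nonneg_AE) auto
    also have "\<dots> = (\<integral>\<omega>. (Z \<omega>)^2 - 2 * l * Z \<omega> + l^2 * indicator U \<omega> \<partial>M)" by (simp add: eq)
    also have "\<dots> = (\<integral>\<omega>. (Z \<omega>)^2 \<partial>M) - 2 * l * (\<integral>\<omega>. Z \<omega> \<partial>M) + l^2 * prob U"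
      using intZ intZ2 intI[OF U] Int_absorb2[OF sets.sets_into_space[OF U]]
      by (simp add: Bochner_Integration.integral_add Bochner_Integration.integral_diff Bochner_Integration.integrable_diff)
    finally show ?thesis .
  qed
  have "(\<integral>\<omega>. Z \<omega> \<partial>M)^2 \<le> prob U * (\<integral>\<omega>. (Z \<omega>)^2 \<partial>M)"
    by (rule quad_lemma[OF quad]) simp
  then show ?thesis unfolding EZ EZ2 U_def .
qed


lemma KS_arith:
  fixes S D e pU d :: real
  assumes "S \<ge> 1" "e \<ge> S / 2" "e^2 \<le> pU * (2 * (S + D))" "D \<le> 2 * d * S^2" "pU \<ge> 0" "d > 0"
  shows "1 / (8 + 16 * d) \<le> pU"
proof -
  have "S^2 / 4 \<le> e^2"
  proof -
    have "0 \<le> S / 2" using assms by simp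
    then have "(S / 2)^2 \<le> e^2" using assms(2) by (intro power_mono) auto
    then show ?thesis by (simp add: power2_eq_square)
  qed
  also have "\<dots> \<le> pU * (2 * (S + D))" by fact
  also have "\<dots> \<le> pU * (2 * (S^2 + 2 * d * S^2))"
  proof -
    have "S \<le> S^2" using assms(1) by (simp add: power2_eq_square)
    then show ?thesis using assms by (intro mult_left_mono) auto
  qed
  finally have "S^2 * (1 / 4) \<le> S^2 * (pU * (2 + 4 * d))" by (simp add: algebra_simps)
  moreover have "0 < S^2" using assms(1) by simp
  ultimately have "1 / 4 \<le> pU * (2 + 4 * d)" by (rule mult_left_le_imp_le)
  then show ?thesis using assms(6) by (simp add: field_simps)
qed

lemma (in prob_space) kochen_stone:
  fixes A :: "nat \<Rightarrow> 'a set" and d :: real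
  assumes A: "\<And>n. A n \<in> events" and d: "0 < d"
    and unb: "\<And>B. \<exists>N. B \<le> (\<Sum>n\<in>{1..N}. prob (A n))"
    and lim: "liminf (\<lambda>N. ereal ((\<Sum>n\<in>{1..N}. \<Sum>m\<in>{1..N}. prob (A n \<inter> A (n + m))) / (\<Sum>n\<in>{1..N}. prob (A n))^2)) \<le> ereal d"
  shows "1 / (8 + 16 * d) \<le> prob (\<Inter>m. \<Union>i\<in>{m..}. A i)"
proof -
  define S where "S N = (\<Sum>n\<in>{1..N}. prob (A n))" for N
  define D where "D N = (\<Sum>n\<in>{1..N}. \<Sum>m\<in>{1..N}. prob (A n \<inter> A (n + m)))" for N
  define c where "c = 1 / (8 + 16 * d)"
  have Smono: "S N \<le> S N'" if "N \<le> N'" for N N'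
    unfolding S_def using that by (intro sum_mono2) auto
  have step: "c \<le> prob (\<Union>i\<in>{m..}. A i)" if m: "1 \<le> m" for m
  proof -
    define a where "a = (\<Sum>n\<in>{1..<m}. prob (A n))"
    obtain N0 where N0: "max 1 (2 * a) \<le> S N0" using unb unfolding S_def by blast
    have "liminf (\<lambda>N. ereal (D N / (S N)^2)) < ereal (2 * d)"
      using lim d unfolding S_def D_def by (simp add: le_less_trans)
    from liminf_upper_bound[OF this, of "max N0 m"]
    obtain N where N: "N > max N0 m" and rat: "ereal (D N / (S N)^2) < ereal (2 * d)" by auto
    have SN: "max 1 (2 * a) \<le> S N" using N0 Smono[of N0 N] N by simp
    then have SN1: "1 \<le> S N" by simp
    have DN: "D N \<le> 2 * d * (S N)^2"
    proof -
      have "D N / (S N)^2 < 2 * d" using rat by simp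
      moreover have "0 < (S N)^2" using SN1 by simp
      ultimately show ?thesis by (simp add: field_simps)
    qed
    define I where "I = {m..N}"
    define f where "f i j = prob (A i \<inter> A j)" for i j
    have fnn: "0 \<le> f i j" for i j by (simp add: f_def)
    have fsym: "f i j = f j i" for i j by (simp add: f_def Int_commute)
    have e: "(\<Sum>i\<in>I. prob (A i)) = S N - a"
    proof -
      have "{1..N} = {1..<m} \<union> {m..N}" using m N by auto
      then have "S N = a + (\<Sum>i\<in>I. prob (A i))" unfolding S_def a_def I_def
        by (simp add: sum.union_disjoint ivl_disj_int)
      then show ?thesis by simp
    qed
    have "(\<Sum>i\<in>I. \<Sum>j\<in>I. f i j) \<le> 2 * (\<Sum>i\<in>I. \<Sum>j\<in>I. if i \<le> j then f i j else 0)"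
      by (rule double_sum_sym_le) (auto simp: I_def fnn fsym)
    also have "(\<Sum>i\<in>I. \<Sum>j\<in>I. if i \<le> j then f i j else 0) \<le> (\<Sum>i\<in>I. f i i + (\<Sum>k\<in>{1..N}. f i (i + k)))"
      unfolding I_def by (intro sum_mono inner_sum_le fnn) auto
    also have "\<dots> \<le> (\<Sum>i\<in>{1..N}. f i i + (\<Sum>k\<in>{1..N}. f i (i + k)))"
      unfolding I_def using m by (intro sum_mono2) (auto intro!: add_nonneg_nonneg sum_nonneg fnn)
    also have "\<dots> = S N + D N" unfolding S_def D_def f_def by (simp add: sum.distrib)
    finally have E2: "(\<Sum>i\<in>I. \<Sum>j\<in>I. f i j) \<le> 2 * (S N + D N)" by simp
    have "(\<Sum>i\<in>I. prob (A i))^2 \<le> prob (\<Union>i\<in>I. A i) * (\<Sum>i\<in>I. \<Sum>j\<in>I. f i j)"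
      unfolding f_def by (rule second_moment[OF A]) (simp add: I_def)
    also have "\<dots> \<le> prob (\<Union>i\<in>I. A i) * (2 * (S N + D N))"
      by (intro mult_left_mono E2) simp
    finally have ineq: "(S N - a)^2 \<le> prob (\<Union>i\<in>I. A i) * (2 * (S N + D N))" unfolding e .
    have "c \<le> prob (\<Union>i\<in>I. A i)"
      unfolding c_def by (rule KS_arith[OF SN1 _ ineq DN _ d]) (use SN in auto)
    also have "\<dots> \<le> prob (\<Union>i\<in>{m..}. A i)"
      using A by (intro finite_measure_mono) (auto simp: I_def)
    finally show ?thesis .
  qed
  have "(\<lambda>m. prob (\<Union>i\<in>{m..}. A i)) \<longlonglongrightarrow> prob (\<Inter>m. \<Union>i\<in>{m..}. A i)"
  proof (rule finite_Lim_measure_decseq)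
    show "range (\<lambda>m. \<Union>i\<in>{m..}. A i) \<subseteq> events" using A by auto
    show "decseq (\<lambda>m. \<Union>i\<in>{m..}. A i)" unfolding decseq_def by (auto intro: order_trans)
  qed
  then show ?thesis
    by (rule LIMSEQ_le_const) (use step in \<open>auto simp: c_def\<close>)
qed

lemma approx_algebra:
  assumes fin: "finite_measure P" and sP: "sets P = sigma_sets (space P) G" and alg: "algebra (space P) G"
    and X: "X \<in> sets P"
  shows "\<forall>\<delta>>0. \<exists>B\<in>G. measure P ((X - B) \<union> (B - X)) < \<delta>"
proof -
  interpret finite_measure P by fact
  interpret G: algebra "space P" G by fact
  have Gs: "G \<subseteq> sets P" using sP by auto
  have X': "X \<in> sigma_sets (space P) G" using X sP by simp
  show ?thesis
    using G.Int_stable G.space_closed X'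
  proof (induction rule: sigma_sets_induct_disjoint)
    case (basic A) then show ?case by (intro allI impI bexI[of _ A]) auto
  next
    case empty then show ?case by (intro allI impI bexI[of _ "{}"]) auto
  next
    case (compl A)
    show ?case
    proof (intro allI impI)
      fix \<delta> :: real assume "\<delta> > 0"
      with compl.IH obtain B where B: "B \<in> G" "measure P ((A - B) \<union> (B - A)) < \<delta>" by blast
      have "space P - B \<in> G" using B by auto
      moreover have "((space P - A) - (space P - B)) \<union> ((space P - B) - (space P - A)) = (A - B) \<union> (B - A)"
        using G.space_closed B(1) sigma_sets_into_sp[OF G.space_closed compl.hyps] by auto
      ultimately show "\<exists>B\<in>G. measure P ((space P - A - B) \<union> (B - (space P - A))) < \<delta>"
        using B by (intro bexI[of _ "space P - B"]) auto
    qed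
  next
    case (union A)
    have As: "A i \<in> sets P" for i using union.hyps(2) sP by auto
    show ?case
    proof (intro allI impI)
      fix \<delta> :: real assume d: "\<delta> > 0"
      have "(\<lambda>n. measure P (\<Union>i\<in>{n..}. A i)) \<longlonglongrightarrow> measure P (\<Inter>n. \<Union>i\<in>{n..}. A i)"
        using As by (intro finite_Lim_measure_decseq) (auto simp: decseq_def intro: order_trans)
      moreover have "(\<Inter>n. \<Union>i\<in>{n..}. A i) = {}"
      proof (rule ccontr)
        assume "(\<Inter>n. \<Union>i\<in>{n..}. A i) \<noteq> {}"
        then obtain x where x: "\<And>n. x \<in> (\<Union>i\<in>{n..}. A i)" by blast
        from x[of 0] obtain i where i: "x \<in> A i" by auto
        from x[of "Suc i"] obtain j where j: "j \<ge> Suc i" "x \<in> A j" by auto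
        have "A i \<inter> A j = {}" using union.hyps(1) j(1) unfolding disjoint_family_on_def by auto
        with i j show False by auto
      qed
      ultimately have "(\<lambda>n. measure P (\<Union>i\<in>{n..}. A i)) \<longlonglongrightarrow> 0" by simp
      then obtain N where N: "measure P (\<Union>i\<in>{N..}. A i) < \<delta> / 2"
        using d by (auto dest!: order_tendstoD(2)[where a="\<delta> / 2"] simp: eventually_sequentially) blast
      have "\<forall>i. \<exists>B\<in>G. measure P ((A i - B) \<union> (B - A i)) < \<delta> / (2 * (Suc N))"
        using union.IH d by auto
      then obtain B where B: "\<And>i. B i \<in> G" "\<And>i. measure P ((A i - B i) \<union> (B i - A i)) < \<delta> / (2 * (Suc N))"
        by metis
      define BB where "BB = (\<Union>i<N. B i)"
      have BB: "BB \<in> G" unfolding BB_def using B(1) by auto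
      have Bs: "B i \<in> sets P" for i using B(1) Gs by auto
      have sub: "((\<Union>i. A i) - BB) \<union> (BB - (\<Union>i. A i)) \<subseteq> (\<Union>i\<in>{N..}. A i) \<union> (\<Union>i<N. (A i - B i) \<union> (B i - A i))"
        unfolding BB_def by (auto simp: not_less) (metis atLeast_iff lessThan_iff not_le)
      have "measure P (((\<Union>i. A i) - BB) \<union> (BB - (\<Union>i. A i))) \<le> measure P ((\<Union>i\<in>{N..}. A i) \<union> (\<Union>i<N. (A i - B i) \<union> (B i - A i)))"
        using As Bs by (intro finite_measure_mono[OF sub]) auto
      also have "\<dots> \<le> measure P (\<Union>i\<in>{N..}. A i) + measure P (\<Union>i<N. (A i - B i) \<union> (B i - A i))"
        using As Bs by (intro measure_Un_le) auto
      also have "measure P (\<Union>i<N. (A i - B i) \<union> (B i - A i)) \<le> (\<Sum>i<N. measure P ((A i - B i) \<union> (B i - A i)))"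
        using As Bs by (intro finite_measure_subadditive_finite) auto
      also have "\<dots> \<le> (\<Sum>i<N. \<delta> / (2 * (Suc N)))" using B(2) by (intro sum_mono less_imp_le) auto
      also have "\<dots> = N * (\<delta> / (2 * (Suc N)))" by simp
      also have "\<dots> < \<delta> / 2"
      proof -
        have "N * (\<delta> / (2 * (Suc N))) = (\<delta> / 2) * (N / Suc N)" by (simp add: field_simps)
        also have "\<dots> < \<delta> / 2" using d by (simp add: field_simps)
        finally show ?thesis .
      qed
      finally have "measure P (((\<Union>i. A i) - BB) \<union> (BB - (\<Union>i. A i))) < \<delta>" using N by simp
      then show "\<exists>B\<in>G. measure P (((\<Union>i. A i) - B) \<union> (B - (\<Union>i. A i))) < \<delta>" using BB by blast
    qed
  qed
qed

context mrw begin

lemma nu_eq: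
  assumes pm: "prob_space \<mu>" and sm: "sets \<mu> = sets Xs"
  shows "\<mu> \<Otimes>\<^sub>M return (borel :: (real^2) measure) 0 = distr \<mu> M (\<lambda>x. (x, 0))"
proof (rule M_eqI[symmetric])
  have mf: "(\<lambda>x. (x, 0::real^2)) \<in> \<mu> \<rightarrow>\<^sub>M M"
    unfolding state_space_def measurable_cong_sets[OF sm refl] by measurable
  show "sets (distr \<mu> M (\<lambda>x. (x, 0))) = sets M" by simp
  show "sets (\<mu> \<Otimes>\<^sub>M return (borel :: (real^2) measure) 0) = sets M"
    unfolding state_space_def by (rule sets_pair_measure_cong[OF sm]) simp
  show "finite_measure (distr \<mu> M (\<lambda>x. (x, 0)))"
    by (rule finite_measure.finite_measure_distr[OF prob_fin[OF pm] mf])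
  fix A B assume A: "A \<in> sets Xs" and B: "B \<in> sets (borel :: (real^2) measure)"
  interpret R: prob_space "return (borel :: (real^2) measure) 0" by (rule prob_space_return) simp
  have AB: "A \<times> B \<in> sets M" using A B by (simp add: state_space_def pair_measureI)
  have "emeasure (distr \<mu> M (\<lambda>x. (x, 0))) (A \<times> B) = emeasure \<mu> ((\<lambda>x. (x, 0)) -` (A \<times> B) \<inter> space \<mu>)"
    by (rule emeasure_distr[OF mf AB])
  also have "\<dots> = emeasure \<mu> A * indicator B 0"
    using sets.sets_into_space[OF A] sets_eq_imp_space_eq[OF sm] by (auto simp: indicator_def Int_absorb2)
  also have "\<dots> = emeasure (\<mu> \<Otimes>\<^sub>M return (borel :: (real^2) measure) 0) (A \<times> B)"
    using R.emeasure_pair_measure_Times[of A \<mu> B] A B sm by simp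
  finally show "emeasure (distr \<mu> M (\<lambda>x. (x, 0))) (A \<times> B) = emeasure (\<mu> \<Otimes>\<^sub>M return borel 0) (A \<times> B)" .
qed

lemma nu_prob: assumes pm: "prob_space \<mu>" and sm: "sets \<mu> = sets Xs"
  shows "prob_space (\<mu> \<Otimes>\<^sub>M return (borel :: (real^2) measure) 0)" "sets (\<mu> \<Otimes>\<^sub>M return (borel :: (real^2) measure) 0) = sets M"
proof -
  have mf: "(\<lambda>x. (x, 0::real^2)) \<in> \<mu> \<rightarrow>\<^sub>M M"
    unfolding state_space_def measurable_cong_sets[OF sm refl] by measurable
  show "prob_space (\<mu> \<Otimes>\<^sub>M return (borel :: (real^2) measure) 0)"
    unfolding nu_eq[OF assms] by (rule prob_space.prob_space_distr[OF pm mf])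
  show "sets (\<mu> \<Otimes>\<^sub>M return (borel :: (real^2) measure) 0) = sets M" unfolding nu_eq[OF assms] by simp
qed

lemma P0_eq: assumes ne: "space M \<noteq> {}" and pm: "prob_space \<mu>" and sm: "sets \<mu> = sets Xs"
  shows "P0 Xs K \<mu> = (\<mu> \<Otimes>\<^sub>M return (borel :: (real^2) measure) 0) \<bind> Qk"
  unfolding P0_def by (rule chain_law_eq[OF ne nu_prob[OF pm sm]])

lemma P0_point: assumes ne: "space M \<noteq> {}" and x: "x \<in> space Xs"
  shows "P0 Xs K (return Xs x) = Qk (x, 0)"
proof -
  have pm: "prob_space (return Xs x)" using x by (rule prob_space_return)
  have sm: "sets (return Xs x) = sets Xs" by simp
  have mf: "(\<lambda>x. (x, 0::real^2)) \<in> Xs \<rightarrow>\<^sub>M M"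
    unfolding state_space_def by measurable
  have x0: "(x, 0) \<in> space M" using x by (simp add: space_M)
  have "P0 Xs K (return Xs x) = distr (return Xs x) M (\<lambda>x. (x, 0)) \<bind> Qk"
    unfolding P0_eq[OF ne pm sm] nu_eq[OF pm sm] ..
  also have "distr (return Xs x) M (\<lambda>x. (x, 0)) = return M (x, 0)"
    by (rule distr_return[OF mf x])
  also have "return M (x, 0) \<bind> Qk = Qk (x, 0)"
    by (rule bind_return[OF measurable_prob_algebraD[OF Qk_meas[OF ne]] x0])
  finally show ?thesis .
qed

definition Ev :: "real \<Rightarrow> real^2 \<Rightarrow> (nat \<Rightarrow> 'x \<times> (real^2)) set" where
  "Ev \<epsilon> t = {\<omega>\<in>space PS. \<exists>\<^sub>\<infinity>n. norm (snd (\<omega> n) - t) < \<epsilon>}"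

lemma Ev_sets[measurable]: "Ev \<epsilon> t \<in> sets PS"
proof -
  have "Ev \<epsilon> t = (\<Inter>m. \<Union>i\<in>{m..}. {\<omega>\<in>space PS. norm (snd (\<omega> i) - t) < \<epsilon>}) \<inter> space PS"
    unfolding Ev_def INFM_nat_le by auto
  also have "\<dots> \<in> sets PS"
  proof -
    have "{\<omega>\<in>space PS. norm (snd (\<omega> i) - t) < \<epsilon>} \<in> sets PS" for i
      unfolding state_space_def by measurable
    then show ?thesis by auto
  qed
  finally show ?thesis .
qed

lemma Ev_trans: "transl t -` Ev \<epsilon> s \<inter> space PS = Ev \<epsilon> (s - t)"
proof -
  have "\<omega> \<in> space PS \<Longrightarrow> transl t \<omega> \<in> space PS" for \<omega>
    using measurable_space[OF transl_meas] by blast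
  moreover have "norm (snd \<omega> + t - s) = norm (snd \<omega> - (s - t))" for \<omega> :: "'x \<times> (real^2)"
    by (simp add: algebra_simps)
  ultimately show ?thesis unfolding Ev_def by (auto simp: transl_def trn_def)
qed

lemma Ev_shift: "\<omega> \<in> space PS \<Longrightarrow> pshift n \<omega> \<in> Ev \<epsilon> t \<longleftrightarrow> \<omega> \<in> Ev \<epsilon> t"
proof -
  assume \<omega>: "\<omega> \<in> space PS"
  then have sp: "pshift n \<omega> \<in> space PS" using measurable_space[OF pshift_meas] by blast
  have "(\<exists>\<^sub>\<infinity>i. norm (snd (\<omega> (n + i)) - t) < \<epsilon>) \<longleftrightarrow> (\<exists>\<^sub>\<infinity>i. norm (snd (\<omega> i) - t) < \<epsilon>)"
  proof
    assume "\<exists>\<^sub>\<infinity>i. norm (snd (\<omega> (n + i)) - t) < \<epsilon>"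
    then show "\<exists>\<^sub>\<infinity>i. norm (snd (\<omega> i) - t) < \<epsilon>"
      unfolding INFM_nat_le by (metis le_add2 le_trans)
  next
    assume h: "\<exists>\<^sub>\<infinity>i. norm (snd (\<omega> i) - t) < \<epsilon>"
    show "\<exists>\<^sub>\<infinity>i. norm (snd (\<omega> (n + i)) - t) < \<epsilon>"
      unfolding INFM_nat_le
    proof
      fix m
      obtain k where "k \<ge> n + m" "norm (snd (\<omega> k) - t) < \<epsilon>" using h unfolding INFM_nat_le by blast
      then show "\<exists>i\<ge>m. norm (snd (\<omega> (n + i)) - t) < \<epsilon>"
        by (intro exI[of _ "k - n"]) auto
    qed
  qed
  then show ?thesis using \<omega> sp unfolding Ev_def pshift_def by auto
qed

end

context mrw begin

lemma Qk_low:
  assumes y: "y \<in> space M" and d: "0 < d"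
    and h1: "(\<Sum>n. emeasure (Qk y) {\<omega>\<in>space PS. norm (snd (\<omega> (Suc n)) - t) < \<epsilon>}) = \<infinity>"
    and h2: "liminf (\<lambda>N. ereal ((\<Sum>n\<in>{1..N}. \<Sum>m\<in>{1..N}. measure (Qk y) {\<omega>\<in>space PS. norm (snd (\<omega> n) - t) < \<epsilon> \<and> norm (snd (\<omega> (n + m)) - t) < \<epsilon>})
           / (\<Sum>n\<in>{1..N}. measure (Qk y) {\<omega>\<in>space PS. norm (snd (\<omega> n) - t) < \<epsilon>})^2)) \<le> ereal d"
  shows "1 / (8 + 16 * d) \<le> measure (Qk y) (Ev \<epsilon> t)"
proof -
  interpret Q: prob_space "Qk y" by (rule Qk_prob[OF y])
  note sQ = Qk_sets[OF y]
  define A where "A n = {\<omega>\<in>space PS. norm (snd (\<omega> n) - t) < \<epsilon>}" for n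
  have A: "A n \<in> Q.events" for n unfolding A_def sQ state_space_def by measurable
  have AA: "A n \<inter> A (n + m) = {\<omega>\<in>space PS. norm (snd (\<omega> n) - t) < \<epsilon> \<and> norm (snd (\<omega> (n + m)) - t) < \<epsilon>}" for n m
    unfolding A_def by auto
  have Ev: "Ev \<epsilon> t = (\<Inter>m. \<Union>i\<in>{m..}. A i)"
    unfolding Ev_def A_def INFM_nat_le by auto
  have unb: "\<exists>N. B \<le> (\<Sum>n\<in>{1..N}. Q.prob (A n))" for B
  proof (rule ccontr)
    assume "\<not> (\<exists>N. B \<le> (\<Sum>n\<in>{1..N}. Q.prob (A n)))"
    then have lt: "(\<Sum>n\<in>{1..N}. Q.prob (A n)) < B" for N by (simp add: not_le)
    have "(\<Sum>n. emeasure (Qk y) (A (Suc n))) \<le> ennreal B"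
    proof (rule suminf_le_const)
      show "summable (\<lambda>n. emeasure (Qk y) (A (Suc n)))" by (rule summableI)
      fix N
      have "(\<Sum>i<N. emeasure (Qk y) (A (Suc i))) = (\<Sum>i<N. ennreal (Q.prob (A (Suc i))))"
        by (intro sum.cong refl Q.emeasure_eq_measure)
      also have "\<dots> = ennreal (\<Sum>i<N. Q.prob (A (Suc i)))"
        by (rule sum_ennreal) simp
      also have "(\<Sum>i<N. Q.prob (A (Suc i))) = (\<Sum>n\<in>{1..N}. Q.prob (A n))"
        by (simp add: sum.atLeast1_atMost_eq)
      finally show "(\<Sum>i<N. emeasure (Qk y) (A (Suc i))) \<le> ennreal B"
        using lt[of N] by (simp add: ennreal_leI less_imp_le)
    qed
    then show False using h1 unfolding A_def by (simp add: top_unique)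
  qed
  have lim: "liminf (\<lambda>N. ereal ((\<Sum>n\<in>{1..N}. \<Sum>m\<in>{1..N}. Q.prob (A n \<inter> A (n + m))) / (\<Sum>n\<in>{1..N}. Q.prob (A n))^2)) \<le> ereal d"
    unfolding AA using h2 unfolding A_def .
  show ?thesis unfolding Ev by (rule Q.kochen_stone[OF A d unb lim])
qed

end

lemma final_arith:
  fixes g b bg gb bmg c \<delta> :: real
  assumes "g \<le> bg + gb" "b \<le> g + bmg" "c \<le> 1" "0 \<le> g" "bg \<le> (1 - c) * b" "gb < \<delta>" "bmg < \<delta>" "0 < c"
  shows "c * g \<le> (2 - c) * \<delta>"
proof -
  have "(1 - c) * b \<le> (1 - c) * (g + \<delta>)" using assms by (intro mult_left_mono) auto
  then show ?thesis using assms by (simp add: algebra_simps)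
qed

context mrw begin

lemma gen_cyl:
  assumes y0: "y0 \<in> space M"
  assumes B: "B \<in> projective_family.generator UNIV (\<lambda>_::nat. M)"
  shows "\<exists>n X. X \<in> sets (Pi\<^sub>M {0..<Suc n} (\<lambda>_. M)) \<and> B = {\<omega>\<in>space PS. restrict \<omega> {0..<Suc n} \<in> X}"
proof -
  interpret IT: Ionescu_Tulcea "ITP y0" "\<lambda>_. M" by (rule IT_loc[OF y0])
  from B obtain J X where J: "finite J" and X: "X \<in> sets (Pi\<^sub>M J (\<lambda>_. M))" and BJ: "B = prod_emb UNIV (\<lambda>_. M) J X"
    by (auto elim!: IT.PF.generator.cases)
  obtain n where n: "J \<subseteq> {0..<Suc n}"
  proof -
    obtain k where "J \<subseteq> {..<k}" using finite_nat_bounded[OF J] by auto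
    then have "J \<subseteq> {0..<Suc k}" by auto
    then show ?thesis using that by blast
  qed
  define X' where "X' = prod_emb {0..<Suc n} (\<lambda>_. M) J X"
  have X': "X' \<in> sets (Pi\<^sub>M {0..<Suc n} (\<lambda>_. M))" unfolding X'_def using n X by simp
  have "B = prod_emb UNIV (\<lambda>_. M) {0..<Suc n} X'" unfolding BJ X'_def using n by simp
  also have "\<dots> = {\<omega>\<in>space PS. restrict \<omega> {0..<Suc n} \<in> X'}"
    by (auto simp: prod_emb_def space_PiM)
  finally show ?thesis using X' by blast
qed

lemma gen_facts:
  assumes y0: "y0 \<in> space M"
  shows "algebra (space PS) (projective_family.generator UNIV (\<lambda>_::nat. M))"
    "sets PS = sigma_sets (space PS) (projective_family.generator UNIV (\<lambda>_::nat. M))"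
proof -
  interpret IT: Ionescu_Tulcea "ITP y0" "\<lambda>_. M" by (rule IT_loc[OF y0])
  show "algebra (space PS) (projective_family.generator UNIV (\<lambda>_::nat. M))" by (rule IT.PF.algebra_generator)
  show "sets PS = sigma_sets (space PS) (projective_family.generator UNIV (\<lambda>_::nat. M))" by (rule IT.PF.sets_PiM_generator)
qed


lemma recur:
  assumes ne: "space M \<noteq> {}"
    and MRW: "\<And>x s A B. x \<in> space Xs \<Longrightarrow> A \<in> sets Xs \<Longrightarrow> B \<in> sets (borel :: (real^2) measure) \<Longrightarrow>
        measure (K (x, s)) (A \<times> B) = measure (K (x, 0)) (A \<times> ((\<lambda>t. t - s) ` B))"
    and pm: "prob_space \<mu>" and sm: "sets \<mu> = sets Xs"
    and SSc: "closed SS"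
    and SSd: "\<And>a b. a \<in> SS \<Longrightarrow> b \<in> SS \<Longrightarrow> a - b \<in> SS"
    and supp: "\<And>x n. x \<in> space Xs \<Longrightarrow> measure (Qk (x, 0)) {\<omega>\<in>space PS. snd (\<omega> n) \<in> SS} = 1"
    and low: "\<And>x t. x \<in> space Xs \<Longrightarrow> t \<in> SS \<Longrightarrow> c \<le> measure (Qk (x, 0)) (Ev \<epsilon> t)"
    and c: "0 < c" and s: "s \<in> SS"
  shows "measure ((\<mu> \<Otimes>\<^sub>M return (borel :: (real^2) measure) 0) \<bind> Qk) (Ev \<epsilon> s) = 1"
proof -
  define \<nu> where "\<nu> = \<mu> \<Otimes>\<^sub>M return (borel :: (real^2) measure) 0"
  have p\<nu>: "prob_space \<nu>" and s\<nu>: "sets \<nu> = sets M" unfolding \<nu>_def using nu_prob[OF pm sm] by auto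
  define P where "P = \<nu> \<bind> Qk"
  have pP: "prob_space P" unfolding P_def by (rule mix_prob[OF ne s\<nu> p\<nu>])
  interpret P: prob_space P by fact
  have sP: "sets P = sets PS" unfolding P_def by (rule mix_sets[OF ne s\<nu>])
  have spP: "space P = space PS" using sets_eq_imp_space_eq[OF sP] .
  have GP: "GX P" unfolding P_def by (rule mix_GX[OF ne s\<nu>])
  have SSb: "SS \<in> sets (borel :: (real^2) measure)" using SSc by (rule borel_closed)
  have AE_SS: "AE \<omega> in P. \<forall>n. snd (\<omega> n) \<in> SS"
    unfolding AE_all_countable
  proof
    fix n
    define Bn where "Bn = {\<omega>\<in>space PS. snd (\<omega> n) \<notin> SS}"
    have Bn: "Bn \<in> sets PS" unfolding Bn_def state_space_def using SSb by measurable
    have "emeasure P Bn = (\<integral>\<^sup>+y. emeasure (Qk y) Bn \<partial>\<nu>)" unfolding P_def by (rule mix_emeasure[OF ne s\<nu> Bn])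
    also have "\<dots> = (\<integral>\<^sup>+x. emeasure (Qk (x, 0)) Bn \<partial>\<mu>)"
    proof -
      have mf: "(\<lambda>x. (x, 0::real^2)) \<in> \<mu> \<rightarrow>\<^sub>M M"
        unfolding state_space_def measurable_cong_sets[OF sm refl] by measurable
      show ?thesis unfolding \<nu>_def nu_eq[OF pm sm]
        by (rule nn_integral_distr[OF mf]) (simp add: measurable_cong_sets[OF sets_distr refl] Qk_emeasure_meas[OF ne Bn])
    qed
    also have "\<dots> = (\<integral>\<^sup>+x. 0 \<partial>\<mu>)"
    proof (rule nn_integral_cong)
      fix x assume "x \<in> space \<mu>"
      then have x: "x \<in> space Xs" using sets_eq_imp_space_eq[OF sm] by simp
      have x0: "(x, 0) \<in> space M" using x by (simp add: space_M)
      interpret Q: prob_space "Qk (x, 0)" by (rule Qk_prob[OF x0])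
      have "Bn = space (Qk (x, 0)) - {\<omega>\<in>space PS. snd (\<omega> n) \<in> SS}"
        unfolding Bn_def using sets_eq_imp_space_eq[OF Qk_sets[OF x0]] by auto
      moreover have "{\<omega>\<in>space PS. snd (\<omega> n) \<in> SS} \<in> Q.events"
        unfolding Qk_sets[OF x0] state_space_def using SSb by measurable
      ultimately have "Q.prob Bn = 0" using supp[OF x, of n] Q.prob_compl by simp
      then show "emeasure (Qk (x, 0)) Bn = 0" by (simp add: Q.emeasure_eq_measure)
    qed
    finally have "emeasure P Bn = 0" by simp
    then show "AE \<omega> in P. snd (\<omega> n) \<in> SS"
      using Bn by (intro AE_I[where N=Bn]) (auto simp: Bn_def spP sP)
  qed
  define G where "G = space PS - Ev \<epsilon> s"
  have G: "G \<in> sets PS" unfolding G_def by auto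
  have bnd: "measure (Qk y) G \<le> 1 - c" if y: "y \<in> space M" and ySS: "snd y \<in> SS" for y
  proof -
    obtain x t where yx: "y = (x, t)" by (cases y)
    have x: "x \<in> space Xs" using y yx by (simp add: space_M)
    have x0: "(x, 0) \<in> space M" using x by (simp add: space_M)
    have yt: "y = trn t (x, 0)" unfolding yx trn_def by simp
    have Qy: "Qk y = distr (Qk (x, 0)) PS (transl t)" unfolding yt by (rule Qk_trans[OF ne x0 MRW])
    interpret Q: prob_space "Qk y" by (rule Qk_prob[OF y])
    have "measure (Qk y) (Ev \<epsilon> s) = measure (Qk (x, 0)) (transl t -` Ev \<epsilon> s \<inter> space (Qk (x, 0)))"
      unfolding Qy by (rule measure_distr) (simp_all add: measurable_cong_sets[OF Qk_sets[OF x0] refl])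
    also have "transl t -` Ev \<epsilon> s \<inter> space (Qk (x, 0)) = Ev \<epsilon> (s - t)"
      using sets_eq_imp_space_eq[OF Qk_sets[OF x0]] Ev_trans by simp
    finally have "measure (Qk y) (Ev \<epsilon> s) \<ge> c"
      using low[OF x SSd[OF s]] ySS yx by simp
    moreover have "measure (Qk y) G = 1 - measure (Qk y) (Ev \<epsilon> s)"
      unfolding G_def using sets_eq_imp_space_eq[OF Qk_sets[OF y]] Qk_sets[OF y]
      by (subst Q.prob_compl[symmetric]) auto
    ultimately show ?thesis by simp
  qed
  have cyl: "measure P (C \<inter> G) \<le> (1 - c) * measure P C"
    if X: "X \<in> sets (Pi\<^sub>M {0..<Suc n} (\<lambda>_. M))" and C: "C = {\<omega>\<in>space PS. restrict \<omega> {0..<Suc n} \<in> X}" for n X C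
  proof -
    have Cs: "C \<in> sets PS" unfolding C using X by (rule cyl_sets)
    have CG: "C \<inter> pshift n -` G = C \<inter> G"
    proof -
      have "\<omega> \<in> space PS \<Longrightarrow> pshift n \<omega> \<in> space PS" for \<omega> using measurable_space[OF pshift_meas] by blast
      then show ?thesis unfolding C G_def using Ev_shift by auto
    qed
    have "emeasure P (C \<inter> G) = (\<integral>\<^sup>+\<omega>. indicator C \<omega> * emeasure (Qk (\<omega> n)) G \<partial>P)"
      using markov[OF ne prob_fin[OF pP] sP GP X G] unfolding C[symmetric] CG .
    also have "\<dots> \<le> (\<integral>\<^sup>+\<omega>. indicator C \<omega> * ennreal (1 - c) \<partial>P)"
    proof (rule nn_integral_mono_AE)
      show "AE \<omega> in P. indicator C \<omega> * emeasure (Qk (\<omega> n)) G \<le> indicator C \<omega> * ennreal (1 - c)"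
        using AE_SS
      proof eventually_elim
        case (elim \<omega>)
        show ?case
        proof (cases "\<omega> \<in> space P")
          case True
          then have wn: "\<omega> n \<in> space M" by (auto simp: spP space_PiM)
          interpret Q: prob_space "Qk (\<omega> n)" by (rule Qk_prob[OF wn])
          have "emeasure (Qk (\<omega> n)) G = ennreal (measure (Qk (\<omega> n)) G)" by (rule Q.emeasure_eq_measure)
          also have "\<dots> \<le> ennreal (1 - c)" using bnd[OF wn] elim by (intro ennreal_leI) auto
          finally show ?thesis by (intro mult_left_mono) auto
        qed (auto simp: indicator_def C spP)
      qed
    qed
    also have "\<dots> = ennreal (1 - c) * emeasure P C"
      using Cs sP by (subst nn_integral_multc) (auto simp: mult.commute)
    finally have "ennreal (measure P (C \<inter> G)) \<le> ennreal ((1 - c) * measure P C)"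
      using c P.emeasure_eq_measure by (simp add: ennreal_mult'' ennreal_mult)
    moreover have "c \<le> 1" using low[of _ s] s ne P.prob_le_1 
    proof -
      obtain y where "y \<in> space M" using ne by auto
      then obtain x t where x: "x \<in> space Xs" using ne by (auto simp: space_M)
      have "(x, 0) \<in> space M" using x by (simp add: space_M)
      then show "c \<le> 1" using low[OF x s] prob_space.prob_le_1[OF Qk_prob] order_trans by blast
    qed
    ultimately show ?thesis using c by (subst (asm) ennreal_le_iff) auto
  qed
  obtain y0 where y0: "y0 \<in> space M" using ne by auto
  note gf = gen_facts[OF y0]
  have sPg: "sets P = sigma_sets (space P) (projective_family.generator UNIV (\<lambda>_::nat. M))"
    using gf(2) sP spP by simp
  have alg: "algebra (space P) (projective_family.generator UNIV (\<lambda>_::nat. M))" using gf(1) spP by simp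
  have GP': "G \<in> P.events" using G sP by simp
  have ap: "\<forall>\<delta>>0. \<exists>B\<in>projective_family.generator UNIV (\<lambda>_::nat. M). measure P ((G - B) \<union> (B - G)) < \<delta>"
    by (rule approx_algebra[OF prob_fin[OF pP] sPg alg GP'])
  have key: "c * measure P G \<le> 0 + e" if e: "0 < e" for e
  proof -
    define \<delta> where "\<delta> = e / 2"
    have d: "0 < \<delta>" using e by (simp add: \<delta>_def)
    from ap d obtain B where B: "B \<in> projective_family.generator UNIV (\<lambda>_::nat. M)"
      and Bd: "measure P ((G - B) \<union> (B - G)) < \<delta>" by blast
    from gen_cyl[OF y0 B] obtain n X where X: "X \<in> sets (Pi\<^sub>M {0..<Suc n} (\<lambda>_. M))"
      and BX: "B = {\<omega>\<in>space PS. restrict \<omega> {0..<Suc n} \<in> X}" by blast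
    have Bs: "B \<in> P.events" unfolding BX sP using X by (rule cyl_sets)
    have c1: "measure P (B \<inter> G) \<le> (1 - c) * measure P B" by (rule cyl[OF X BX])
    have d1: "measure P (G - B) < \<delta>"
      using Bd P.finite_measure_mono[of "G - B" "(G - B) \<union> (B - G)"] Bs GP' by auto
    have d2: "measure P (B - G) < \<delta>"
      using Bd P.finite_measure_mono[of "B - G" "(G - B) \<union> (B - G)"] Bs GP' by auto
    have "measure P G \<le> measure P (B \<inter> G) + measure P (G - B)"
    proof -
      have "G = (B \<inter> G) \<union> (G - B)" by auto
      then have "measure P G = measure P ((B \<inter> G) \<union> (G - B))" by simp
      also have "\<dots> \<le> measure P (B \<inter> G) + measure P (G - B)" using Bs GP' by (intro measure_Un_le) auto
      finally show ?thesis .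
    qed
    moreover have "measure P B \<le> measure P G + measure P (B - G)"
    proof -
      have "measure P B \<le> measure P (G \<union> (B - G))" using Bs GP' by (intro P.finite_measure_mono) auto
      also have "\<dots> \<le> measure P G + measure P (B - G)" using Bs GP' by (intro measure_Un_le) auto
      finally show ?thesis .
    qed
    moreover have "c \<le> 1"
    proof -
      obtain x t where "(x, t) \<in> space M" using ne by auto
      then have x: "x \<in> space Xs" by (simp add: space_M)
      have "(x, 0) \<in> space M" using x by (simp add: space_M)
      then show "c \<le> 1" using low[OF x s] prob_space.prob_le_1[OF Qk_prob] order_trans by blast
    qed
    moreover have "0 \<le> measure P G" by simp
    ultimately have "c * measure P G \<le> (2 - c) * \<delta>" using c1 d1 d2 c
      by (intro final_arith[where bg="measure P (B \<inter> G)" and gb="measure P (G - B)" and b="measure P B" and bmg="measure P (B - G)"]) auto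
    also have "\<dots> \<le> e" using c d unfolding \<delta>_def by (simp add: field_simps)
    finally show ?thesis by simp
  qed
  have "c * measure P G \<le> 0" by (rule field_le_epsilon[OF key])
  then have PG: "measure P G = 0" using c by (simp add: mult_le_0_iff measure_nonneg antisym)
  have "measure P (Ev \<epsilon> s) = 1 - measure P G"
    unfolding G_def using P.prob_compl[of "Ev \<epsilon> s"] spP sP by simp
  then show ?thesis using PG unfolding P_def \<nu>_def by simp
qed

end

theorem mainTheorem2:
  fixes Xs :: "'x measure"
    and K :: "'x \<times> (real^2) \<Rightarrow> ('x \<times> (real^2)) measure"
    and \<pi> :: "'x measure"
    and SS :: "(real^2) set"
    and \<epsilon>S d :: real
  assumes K_kernel: "K \<in> state_space Xs \<rightarrow>\<^sub>M prob_algebra (state_space Xs)"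
    and MRW: "\<And>x s A B. x \<in> space Xs \<Longrightarrow> A \<in> sets Xs \<Longrightarrow> B \<in> sets (borel :: (real^2) measure) \<Longrightarrow>
        measure (K (x, s)) (A \<times> B) = measure (K (x, 0)) (A \<times> ((\<lambda>t. t - s) ` B))"
    and pi_prob: "prob_space \<pi>" and pi_sets: "sets \<pi> = sets Xs"
    and pi_inv: "\<And>A. A \<in> sets Xs \<Longrightarrow>
        (\<integral>x. measure (K (x, 0)) (A \<times> UNIV) \<partial>\<pi>) = measure \<pi> A"
    and S1_int: "integrable (P0 Xs K \<pi>) (S 1)"
    and S1_mean: "(\<integral>\<omega>. S 1 \<omega> \<partial>(P0 Xs K \<pi>)) = 0"
    and SS_closed: "closed SS" and SS_zero: "0 \<in> SS"
    and SS_diff: "\<And>a b. a \<in> SS \<Longrightarrow> b \<in> SS \<Longrightarrow> a - b \<in> SS"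
    and SS_dim: "dim SS = 2"
    and SS_support: "\<And>x n. x \<in> space Xs \<Longrightarrow>
        measure (P0 Xs K (return Xs x)) {\<omega>\<in>space (P0 Xs K (return Xs x)). S n \<omega> \<in> SS} = 1"
    and eS_pos: "\<epsilon>S > 0" and d_pos: "d > 0"
    and H1: "\<And>\<epsilon> x s. 0 < \<epsilon> \<Longrightarrow> \<epsilon> < \<epsilon>S \<Longrightarrow> x \<in> space Xs \<Longrightarrow> s \<in> SS \<Longrightarrow>
        (\<Sum>n. emeasure (P0 Xs K (return Xs x))
            {\<omega>\<in>space (P0 Xs K (return Xs x)). norm (S (Suc n) \<omega> - s) < \<epsilon>}) = \<infinity>"
    and H2: "\<And>\<epsilon> x s. 0 < \<epsilon> \<Longrightarrow> \<epsilon> < \<epsilon>S \<Longrightarrow> x \<in> space Xs \<Longrightarrow> s \<in> SS \<Longrightarrow>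
        liminf (\<lambda>N. ereal
          ((\<Sum>n\<in>{1..N}. \<Sum>m\<in>{1..N}. measure (P0 Xs K (return Xs x))
              {\<omega>\<in>space (P0 Xs K (return Xs x)).
                 norm (S n \<omega> - s) < \<epsilon> \<and> norm (S (n + m) \<omega> - s) < \<epsilon>})
           / (\<Sum>n\<in>{1..N}. measure (P0 Xs K (return Xs x))
              {\<omega>\<in>space (P0 Xs K (return Xs x)). norm (S n \<omega> - s) < \<epsilon>}) ^ 2))
        \<le> ereal d"
  shows "\<And>\<mu>. prob_space \<mu> \<Longrightarrow> sets \<mu> = sets Xs \<Longrightarrow> recurrence_set Xs K SS \<mu> = SS"
proof -
  interpret mrw Xs K by (rule mrw.intro[OF K_kernel])
  have spi: "space \<pi> = space Xs" using sets_eq_imp_space_eq[OF pi_sets] .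
  have neXs: "space Xs \<noteq> {}" using prob_space.not_empty[OF pi_prob] spi by simp
  have ne: "space M \<noteq> {}" using neXs by (simp add: space_M)
  fix \<mu> :: "'x measure" assume pm: "prob_space \<mu>" and sm: "sets \<mu> = sets Xs"
  show "recurrence_set Xs K SS \<mu> = SS"
  proof
    show "recurrence_set Xs K SS \<mu> \<subseteq> SS" by (auto simp: recurrence_set_def)
  next
    show "SS \<subseteq> recurrence_set Xs K SS \<mu>"
    proof
      fix s assume s: "s \<in> SS"
      have "measure (P0 Xs K \<mu>) {\<omega>\<in>space (P0 Xs K \<mu>). \<exists>\<^sub>\<infinity>n. norm (S n \<omega> - s) < \<epsilon>} = 1" if e: "\<epsilon> > 0" for \<epsilon>
      proof -
        define \<epsilon>' where "\<epsilon>' = min \<epsilon> (\<epsilon>S / 2)"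
        have e'1: "0 < \<epsilon>'" using e eS_pos by (simp add: \<epsilon>'_def)
        have e'2: "\<epsilon>' < \<epsilon>S" using eS_pos by (simp add: \<epsilon>'_def)
        define c where "c = 1 / (8 + 16 * d)"
        have c: "0 < c" using d_pos by (simp add: c_def)
        have sp0: "space (Qk (x, 0)) = space PS" if "x \<in> space Xs" for x
          using sets_eq_imp_space_eq[OF Qk_sets] that by (simp add: space_M)
        have low: "c \<le> measure (Qk (x, 0)) (Ev \<epsilon>' t)" if x: "x \<in> space Xs" and t: "t \<in> SS" for x t
        proof -
          have x0: "(x, 0) \<in> space M" using x by (simp add: space_M)
          have h1: "(\<Sum>n. emeasure (Qk (x, 0)) {\<omega>\<in>space PS. norm (snd (\<omega> (Suc n)) - t) < \<epsilon>'}) = \<infinity>"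
            using H1[OF e'1 e'2 x t] unfolding P0_point[OF ne x] sp0[OF x] S_def .
          have h2: "liminf (\<lambda>N. ereal ((\<Sum>n\<in>{1..N}. \<Sum>m\<in>{1..N}. measure (Qk (x, 0)) {\<omega>\<in>space PS. norm (snd (\<omega> n) - t) < \<epsilon>' \<and> norm (snd (\<omega> (n + m)) - t) < \<epsilon>'})
           / (\<Sum>n\<in>{1..N}. measure (Qk (x, 0)) {\<omega>\<in>space PS. norm (snd (\<omega> n) - t) < \<epsilon>'})^2)) \<le> ereal d"
            using H2[OF e'1 e'2 x t] unfolding P0_point[OF ne x] sp0[OF x] S_def .
          show ?thesis unfolding c_def by (rule Qk_low[OF x0 d_pos h1 h2])
        qed
        have supp: "measure (Qk (x, 0)) {\<omega>\<in>space PS. snd (\<omega> n) \<in> SS} = 1" if x: "x \<in> space Xs" for x n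
          using SS_support[OF x, of n] unfolding P0_point[OF ne x] sp0[OF x] S_def .
        have R: "measure ((\<mu> \<Otimes>\<^sub>M return (borel :: (real^2) measure) 0) \<bind> Qk) (Ev \<epsilon>' s) = 1"
          by (rule recur[OF ne MRW pm sm SS_closed SS_diff supp low c s])
        have P0e: "P0 Xs K \<mu> = (\<mu> \<Otimes>\<^sub>M return (borel :: (real^2) measure) 0) \<bind> Qk" by (rule P0_eq[OF ne pm sm])
        interpret P: prob_space "P0 Xs K \<mu>" unfolding P0e by (rule mix_prob[OF ne nu_prob(2)[OF pm sm] nu_prob(1)[OF pm sm]])
        have sP: "sets (P0 Xs K \<mu>) = sets PS" unfolding P0e by (rule mix_sets[OF ne nu_prob(2)[OF pm sm]])
        have spP: "space (P0 Xs K \<mu>) = space PS" using sets_eq_imp_space_eq[OF sP] .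
        have sub: "Ev \<epsilon>' s \<subseteq> {\<omega>\<in>space (P0 Xs K \<mu>). \<exists>\<^sub>\<infinity>n. norm (S n \<omega> - s) < \<epsilon>}"
          unfolding Ev_def spP S_def
        proof safe
          fix \<omega> assume "\<omega> \<in> space PS" and h: "\<exists>\<^sub>\<infinity>n. norm (snd (\<omega> n) - s) < \<epsilon>'"
          from h show "\<exists>\<^sub>\<infinity>n. norm (snd (\<omega> n) - s) < \<epsilon>"
            by (rule INFM_mono) (simp add: \<epsilon>'_def)
        qed
        have meas: "{\<omega>\<in>space (P0 Xs K \<mu>). \<exists>\<^sub>\<infinity>n. norm (S n \<omega> - s) < \<epsilon>} \<in> P.events"
        proof -
          have "{\<omega>\<in>space (P0 Xs K \<mu>). \<exists>\<^sub>\<infinity>n. norm (S n \<omega> - s) < \<epsilon>} = Ev \<epsilon> s"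
            unfolding Ev_def spP S_def ..
          then show ?thesis using sP by simp
        qed
        have "1 \<le> measure (P0 Xs K \<mu>) {\<omega>\<in>space (P0 Xs K \<mu>). \<exists>\<^sub>\<infinity>n. norm (S n \<omega> - s) < \<epsilon>}"
          using P.finite_measure_mono[OF sub meas] R unfolding P0e by simp
        then show ?thesis using P.prob_le_1 by (simp add: antisym)
      qed
      then show "s \<in> recurrence_set Xs K SS \<mu>" using s unfolding recurrence_set_def by blast
    qed
  qed
qed

end
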